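(* Let $\mathcal{X}\subseteq\mathbb{R}^d$ be finite, $\mathcal{U}\subseteq\mathbb{R}^d$ a finite set of distinct centers and $\pi:\mathcal{X}\to\mathcal{U}$ any assignment. Let $T$ be the threshold tree output by the Random Thresholds algorithm on $\mathcal{U}$. Then $$\mathbb{E}[\operatorname{cost}_1(\pi_T,\mathcal{U})]\le\alpha(|\mathcal{U}|)\cdot\operatorname{cost}_1(\pi,\mathcal{U}).$$ Therefore the price of explainability for $k$-medians is at most $\alpha(k)$.
   Context: $\operatorname{cost}_1(\sigma,\mathcal{U})=\sum_{x\in\mathcal{X}}\|x-\sigma(x)\|_1$. Threshold trees: rooted binary trees whose internal nodes carry cuts $(i,\theta)$, root region $\mathbb{R}^d$, children regions $B_u\cap\{x_i\le\theta\}$ and $B_u\cap\{x_i>\theta\}$; a tree separates $\mathcal{U}$ if each leaf region contains exactly one center, and then $\pi_T$ maps each point to the center in its leaf region. Random Thresholds algorithm on a finite set $U$ of distinct points (with a fixed box $[a,b]^d$ containing all relevant points): start with the one-node tree; while the leaves do not separate $U$, pick $i\in[d]$ and $\theta\in[a,b]$ independently uniformly at random, and split every leaf $u$ for which $(i,\theta)$ separates some pair of points of $U$ in $B_u$. Closest Point Process: for a set $U\subseteq\mathbb{R}^d$ of $k$ distinct points with $\min_{p\in U}\|p\|_1=1$, run Random Thresholds on $U$, let $\widehat p$ be the unique point of $U$ in the leaf region containing the origin, and let $f(U)=\mathbb{E}[\|\widehat p\|_1]$. Define $\alpha(k)=\max\{f(U): |U|=k\}$ (over all $d$ and all such $U$).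 The price of explainability for $k$-medians is the supremum over finite $\mathcal{X}$ of (minimum $k$-medians cost of a clustering induced by a threshold tree with $k$ leaves)/(optimal $k$-medians cost). *)

theory Defs
  imports "HOL-Probability.Probability"
begin

text \<open>Points of R^d are represented as functions nat => real vanishing at coordinates >= d.\<close>

definition pts :: "nat \<Rightarrow> (nat \<Rightarrow> real) set" where
  "pts d = {x. \<forall>i\<ge>d. x i = 0}"

definition norm1 :: "nat \<Rightarrow> (nat \<Rightarrow> real) \<Rightarrow> real" where
  "norm1 d x = (\<Sum>i<d. \<bar>x i\<bar>)"

definition dist1 :: "nat \<Rightarrow> (nat \<Rightarrow> real) \<Rightarrow> (nat \<Rightarrow> real) \<Rightarrow> real" where
  "dist1 d x y = norm1 d (\<lambda>i. x i - y i)"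

definition cost1 :: "nat \<Rightarrow> ((nat \<Rightarrow> real) \<Rightarrow> (nat \<Rightarrow> real)) \<Rightarrow> (nat \<Rightarrow> real) set \<Rightarrow> real" where
  "cost1 d \<sigma> X = (\<Sum>x\<in>X. dist1 d x (\<sigma> x))"

definition in_box :: "nat \<Rightarrow> real \<Rightarrow> real \<Rightarrow> (nat \<Rightarrow> real) \<Rightarrow> bool" where
  "in_box d a b x \<longleftrightarrow> (\<forall>i<d. a \<le> x i \<and> x i \<le> b)"

text \<open>Random Thresholds: an i.i.d. sequence of cuts (i, theta), i uniform in [d], theta uniform in [a,b].\<close>
definition cutM :: "nat \<Rightarrow> real \<Rightarrow> real \<Rightarrow> (nat \<times> real) measure" where
  "cutM d a b = uniform_count_measure {..<d} \<Otimes>\<^sub>M uniform_measure lborel {a..b}"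

definition cutsM :: "nat \<Rightarrow> real \<Rightarrow> real \<Rightarrow> (nat \<Rightarrow> nat \<times> real) measure" where
  "cutsM d a b = PiM (UNIV :: nat set) (\<lambda>_. cutM d a b)"

definition separates :: "nat \<times> real \<Rightarrow> (nat \<Rightarrow> real) set \<Rightarrow> bool" where
  "separates c S \<longleftrightarrow> (\<exists>p\<in>S. \<exists>q\<in>S. p (fst c) \<le> snd c \<and> snd c < q (fst c))"

text \<open>Effect of one cut on the set of centers lying in the leaf region containing x:
  the leaf is split iff the cut separates two of its centers, and x goes to its side.\<close>
definition refine :: "nat \<times> real \<Rightarrow> (nat \<Rightarrow> real) \<Rightarrow> (nat \<Rightarrow> real) set \<Rightarrow> (nat \<Rightarrow> real) set" where
  "refine c x S = (if separates c S
     then {p\<in>S. (p (fst c) \<le> snd c) = (x (fst c) \<le> snd c)} else S)"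

primrec region_centers :: "(nat \<Rightarrow> nat \<times> real) \<Rightarrow> (nat \<Rightarrow> real) \<Rightarrow> (nat \<Rightarrow> real) set \<Rightarrow> nat \<Rightarrow> (nat \<Rightarrow> real) set" where
  "region_centers \<omega> x U 0 = U"
| "region_centers \<omega> x U (Suc n) = refine (\<omega> n) x (region_centers \<omega> x U n)"

text \<open>pi_T(x): the center in the final leaf region containing x (defined arbitrarily on the
  null event that the process never isolates a center).\<close>
definition leaf_center :: "(nat \<Rightarrow> nat \<times> real) \<Rightarrow> (nat \<Rightarrow> real) \<Rightarrow> (nat \<Rightarrow> real) set \<Rightarrow> (nat \<Rightarrow> real)" where
  "leaf_center \<omega> x U = (if \<exists>n p. region_centers \<omega> x U n = {p}
     then (THE p. \<exists>n. region_centers \<omega> x U n = {p}) else (SOME p. p \<in> U))"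

definition expected_RT_cost :: "nat \<Rightarrow> real \<Rightarrow> real \<Rightarrow> (nat \<Rightarrow> real) set \<Rightarrow> (nat \<Rightarrow> real) set \<Rightarrow> real" where
  "expected_RT_cost d a b U X = (\<integral>\<omega>. cost1 d (\<lambda>x. leaf_center \<omega> x U) X \<partial>cutsM d a b)"

definition closest_point_value :: "nat \<Rightarrow> real \<Rightarrow> real \<Rightarrow> (nat \<Rightarrow> real) set \<Rightarrow> real" where
  "closest_point_value d a b U = (\<integral>\<omega>. norm1 d (leaf_center \<omega> (\<lambda>_. 0) U) \<partial>cutsM d a b)"

definition alpha :: "nat \<Rightarrow> ereal" where
  "alpha k = (SUP (d, a, b, U) \<in> {(d, a, b, U). 0 < d \<and> a < b \<and> finite U \<and> U \<noteq> {} \<and>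
       U \<subseteq> pts d \<and> card U = k \<and> Min (norm1 d ` U) = 1 \<and>
       (\<forall>p\<in>U. in_box d a b p) \<and> in_box d a b (\<lambda>_. 0)}.
     ereal (closest_point_value d a b U))"

datatype ttree = Leaf | Node nat real ttree ttree

primrec leaves :: "ttree \<Rightarrow> nat" where
  "leaves Leaf = 1"
| "leaves (Node i t l r) = leaves l + leaves r"

primrec cuts_ok :: "nat \<Rightarrow> ttree \<Rightarrow> bool" where
  "cuts_ok d Leaf = True"
| "cuts_ok d (Node i t l r) = (i < d \<and> cuts_ok d l \<and> cuts_ok d r)"

primrec leaf_of :: "ttree \<Rightarrow> (nat \<Rightarrow> real) \<Rightarrow> bool list" where
  "leaf_of Leaf x = []"
| "leaf_of (Node i t l r) x = (if x i \<le> t then False # leaf_of l x else True # leaf_of r x)"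

definition tree_cost :: "nat \<Rightarrow> ttree \<Rightarrow> (nat \<Rightarrow> real) set \<Rightarrow> real" where
  "tree_cost d T X = (\<Sum>C\<in>(\<lambda>x. {y\<in>X. leaf_of T y = leaf_of T x}) ` X.
      Inf ((\<lambda>c. \<Sum>y\<in>C. dist1 d y c) ` pts d))"

definition kmed_opt :: "nat \<Rightarrow> nat \<Rightarrow> (nat \<Rightarrow> real) set \<Rightarrow> real" where
  "kmed_opt d k X = Inf {(\<Sum>x\<in>X. Min (dist1 d x ` U)) | U. U \<subseteq> pts d \<and> finite U \<and> card U = k}"

definition price_of_explainability :: "nat \<Rightarrow> ereal" where
  "price_of_explainability k = (SUP (d, X) \<in> {(d, X). 0 < d \<and> finite X \<and> X \<subseteq> pts d}.
     (INF T \<in> {T. cuts_ok d T \<and> leaves T = k}. ereal (tree_cost d T X)) / ereal (kmed_opt d k X))"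

end

theory Submission
  imports Defs
begin

lemma refine_subset: "refine c x S \<subseteq> S"
  by (auto simp: refine_def)

lemma refine_nonempty: "S \<noteq> {} \<Longrightarrow> refine c x S \<noteq> {}"
  unfolding refine_def separates_def by (cases "x (fst c) \<le> snd c") (auto)

lemma refine_psubset: "separates c S \<Longrightarrow> refine c x S \<subset> S"
  unfolding refine_def separates_def by (cases "x (fst c) \<le> snd c") (force, force)

lemma refine_not_sep: "\<not> separates c S \<Longrightarrow> refine c x S = S"
  unfolding refine_def by auto

lemma separates_single[simp]: "\<not> separates c {p}"
  unfolding separates_def by auto

lemma refine_single[simp]: "refine c x {p} = {p}"
  by (simp add: refine_not_sep)

lemma region_subset: "region_centers \<omega> x S n \<subseteq> S"
  by (induction n) (simp, metis order_trans refine_subset region_centers.simps(2))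

lemma region_nonempty: "S \<noteq> {} \<Longrightarrow> region_centers \<omega> x S n \<noteq> {}"
  by (induction n) (auto simp: refine_nonempty)

lemma region_mono: "n \<le> m \<Longrightarrow> region_centers \<omega> x S m \<subseteq> region_centers \<omega> x S n"
proof (induction m)
  case 0 then show ?case by simp
next
  case (Suc m)
  show ?case
  proof (cases "n = Suc m")
    case False
    then have "n \<le> m" using Suc by simp
    then have "region_centers \<omega> x S m \<subseteq> region_centers \<omega> x S n" using Suc by simp
    moreover have "region_centers \<omega> x S (Suc m) \<subseteq> region_centers \<omega> x S m"
      using refine_subset by simp
    ultimately show ?thesis by (rule order_trans[rotated])
  qed simp
qed

lemma region_shift:
  "region_centers \<omega> x S (Suc n) = region_centers (\<lambda>k. \<omega> (Suc k)) x (refine (\<omega> 0) x S) n"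
  by (induction n) auto

lemma region_single_unique:
  assumes "S \<noteq> {}" "region_centers \<omega> x S n = {p}" "region_centers \<omega> x S m = {q}"
  shows "p = q"
proof -
  let ?k = "max n m"
  have "region_centers \<omega> x S ?k \<subseteq> region_centers \<omega> x S n"
    "region_centers \<omega> x S ?k \<subseteq> region_centers \<omega> x S m"
    by (rule region_mono, simp)+
  then have "region_centers \<omega> x S ?k \<subseteq> {p}" "region_centers \<omega> x S ?k \<subseteq> {q}"
    using assms by auto
  moreover have "region_centers \<omega> x S ?k \<noteq> {}" using region_nonempty assms by blast
  ultimately show ?thesis by blast
qed

lemma region_single_stays:
  assumes "region_centers \<omega> x S n = {p}" "n \<le> m" "S \<noteq> {}"
  shows "region_centers \<omega> x S m = {p}"
  using region_mono[OF assms(2), of \<omega> x S] region_nonempty[OF assms(3), of \<omega> x m] assms(1)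
  by (auto simp: subset_singleton_iff)

definition term_ev :: "(nat \<Rightarrow> nat \<times> real) \<Rightarrow> (nat \<Rightarrow> real) \<Rightarrow> (nat \<Rightarrow> real) set \<Rightarrow> bool" where
  "term_ev \<omega> x S \<longleftrightarrow> (\<exists>n p. region_centers \<omega> x S n = {p})"

definition lcv :: "(nat \<Rightarrow> nat \<times> real) \<Rightarrow> (nat \<Rightarrow> real) \<Rightarrow> (nat \<Rightarrow> real) set \<Rightarrow> (nat \<Rightarrow> real)" where
  "lcv \<omega> x S = (THE p. \<exists>n. region_centers \<omega> x S n = {p})"

lemma lcv_eq:
  assumes "S \<noteq> {}" "region_centers \<omega> x S n = {p}"
  shows "lcv \<omega> x S = p"
  unfolding lcv_def
proof (rule the_equality)
  show "\<exists>n. region_centers \<omega> x S n = {p}" using assms by blast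
next
  fix q assume "\<exists>n. region_centers \<omega> x S n = {q}"
  then obtain m where "region_centers \<omega> x S m = {q}" by blast
  then show "q = p" using region_single_unique[OF assms(1) _ assms(2)] by metis
qed

lemma term_evI: "region_centers \<omega> x S n = {p} \<Longrightarrow> term_ev \<omega> x S"
  unfolding term_ev_def by blast

lemma leaf_center_eq:
  assumes "S \<noteq> {}" "region_centers \<omega> x S n = {p}"
  shows "leaf_center \<omega> x S = p"
proof -
  have "\<exists>n p. region_centers \<omega> x S n = {p}" using assms by blast
  then have "leaf_center \<omega> x S = lcv \<omega> x S" unfolding leaf_center_def lcv_def by simp
  then show ?thesis using lcv_eq[OF assms] by simp
qed

lemma leaf_center_term: "term_ev \<omega> x S \<Longrightarrow> leaf_center \<omega> x S = lcv \<omega> x S"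
  unfolding leaf_center_def lcv_def term_ev_def by simp

lemma leaf_center_nterm: "\<not> term_ev \<omega> x S \<Longrightarrow> leaf_center \<omega> x S = (SOME p. p \<in> S)"
  unfolding leaf_center_def term_ev_def by simp

lemma shift_pred:
  assumes "S \<noteq> {}"
  shows "(\<exists>n. region_centers \<omega> x S n = {p}) \<longleftrightarrow>
         (\<exists>n. region_centers (\<lambda>k. \<omega> (Suc k)) x (refine (\<omega> 0) x S) n = {p})"
proof
  assume "\<exists>n. region_centers \<omega> x S n = {p}"
  then obtain n where "region_centers \<omega> x S n = {p}" by blast
  then have "region_centers \<omega> x S (Suc n) = {p}" using region_single_stays[of \<omega> x S n p "Suc n"] assms by simp
  then have "region_centers (\<lambda>k. \<omega> (Suc k)) x (refine (\<omega> 0) x S) n = {p}"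
    by (simp only: region_shift)
  then show "\<exists>n. region_centers (\<lambda>k. \<omega> (Suc k)) x (refine (\<omega> 0) x S) n = {p}" by blast
next
  assume "\<exists>n. region_centers (\<lambda>k. \<omega> (Suc k)) x (refine (\<omega> 0) x S) n = {p}"
  then obtain n where "region_centers (\<lambda>k. \<omega> (Suc k)) x (refine (\<omega> 0) x S) n = {p}" by blast
  then have "region_centers \<omega> x S (Suc n) = {p}" by (simp only: region_shift)
  then show "\<exists>n. region_centers \<omega> x S n = {p}" by blast
qed

lemma term_ev_shift:
  "S \<noteq> {} \<Longrightarrow> term_ev \<omega> x S = term_ev (\<lambda>k. \<omega> (Suc k)) x (refine (\<omega> 0) x S)"
proof -
  assume a: "S \<noteq> {}"
  show ?thesis unfolding term_ev_def
  proof
    assume "\<exists>n p. region_centers \<omega> x S n = {p}"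
    then obtain n p where "region_centers \<omega> x S n = {p}" by blast
    then show "\<exists>n p. region_centers (\<lambda>k. \<omega> (Suc k)) x (refine (\<omega> 0) x S) n = {p}"
      using shift_pred[OF a, of \<omega> x p] by blast
  next
    assume "\<exists>n p. region_centers (\<lambda>k. \<omega> (Suc k)) x (refine (\<omega> 0) x S) n = {p}"
    then obtain n p where "region_centers (\<lambda>k. \<omega> (Suc k)) x (refine (\<omega> 0) x S) n = {p}" by blast
    then show "\<exists>n p. region_centers \<omega> x S n = {p}"
      using shift_pred[OF a, of \<omega> x p] by blast
  qed
qed

lemma lcv_shift:
  "S \<noteq> {} \<Longrightarrow> lcv \<omega> x S = lcv (\<lambda>k. \<omega> (Suc k)) x (refine (\<omega> 0) x S)"
proof -
  assume "S \<noteq> {}"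
  then have "(\<lambda>p. \<exists>n. region_centers \<omega> x S n = {p}) =
     (\<lambda>p. \<exists>n. region_centers (\<lambda>k. \<omega> (Suc k)) x (refine (\<omega> 0) x S) n = {p})"
    using shift_pred[OF \<open>S \<noteq> {}\<close>, of \<omega> x] by (intro ext) blast
  then show ?thesis unfolding lcv_def by (rule arg_cong)
qed


lemma sets_cutM: "sets (cutM d a b) = sets (count_space {..<d} \<Otimes>\<^sub>M borel)"
  unfolding cutM_def
  by (rule sets_pair_measure_cong) (simp_all add: sets_uniform_count_measure)

lemma space_cutM: "space (cutM d a b) = {..<d} \<times> UNIV"
  unfolding cutM_def by (simp add: space_pair_measure space_uniform_count_measure)

lemma meas_cut:
  assumes "\<And>i. i < d \<Longrightarrow> (\<lambda>\<theta>. f (i, \<theta>)) \<in> measurable borel K"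
  shows "f \<in> measurable (cutM d a b) K"
  unfolding measurable_cong_sets[OF sets_cutM refl]
  by (rule measurable_pair_measure_countable1) (use assms in auto)

lemma refine_eq_iff:
  "(refine (i,\<theta>) x T' = T) \<longleftrightarrow>
   ((separates (i,\<theta>) T' \<and> T \<subseteq> T' \<and> (\<forall>p\<in>T'. (p\<in>T) = ((p i \<le> \<theta>) = (x i \<le> \<theta>)))) \<or>
    (\<not> separates (i,\<theta>) T' \<and> T' = T))"
  unfolding refine_def by auto

lemma pred_sep: "finite T' \<Longrightarrow> Measurable.pred borel (\<lambda>\<theta>::real. separates (i,\<theta>) T')"
  unfolding separates_def by measurable

lemma pred_refine_eq:
  assumes "finite T'"
  shows "Measurable.pred (cutM d a b) (\<lambda>c. refine c x T' = T)"
proof (rule meas_cut)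
  fix i
  have [measurable]: "Measurable.pred borel (\<lambda>\<theta>::real. separates (i,\<theta>) T')"
    using assms by (rule pred_sep)
  show "Measurable.pred borel (\<lambda>\<theta>. refine (i,\<theta>) x T' = T)"
    unfolding refine_eq_iff using assms by measurable
qed

lemma space_cutsM: "space (cutsM d a b) = {\<omega>. \<forall>n. \<omega> n \<in> {..<d} \<times> UNIV}"
  unfolding cutsM_def by (auto simp: space_PiM space_cutM PiE_def Pi_def)

lemma comp_meas[measurable]: "(\<lambda>\<omega>. \<omega> n) \<in> measurable (cutsM d a b) (cutM d a b)"
  unfolding cutsM_def by (rule measurable_component_singleton) simp

lemma pred_region:
  assumes "finite S"
  shows "Measurable.pred (cutsM d a b) (\<lambda>\<omega>. region_centers \<omega> x S n = T)"
proof (induction n arbitrary: T)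
  case 0 then show ?case by simp
next
  case (Suc n)
  have eq: "(\<lambda>\<omega>. region_centers \<omega> x S (Suc n) = T) =
     (\<lambda>\<omega>. \<exists>T'\<in>Pow S. region_centers \<omega> x S n = T' \<and> refine (\<omega> n) x T' = T)"
    using region_subset by auto
  have [measurable]: "\<And>T'. T' \<in> Pow S \<Longrightarrow> Measurable.pred (cutsM d a b) (\<lambda>\<omega>. refine (\<omega> n) x T' = T)"
  proof -
    fix T' assume "T' \<in> Pow S"
    then have "finite T'" using assms finite_subset by auto
    show "Measurable.pred (cutsM d a b) (\<lambda>\<omega>. refine (\<omega> n) x T' = T)"
      using measurable_compose[OF comp_meas pred_refine_eq[OF \<open>finite T'\<close>]] .
  qed
  have [measurable]: "\<And>T'. Measurable.pred (cutsM d a b) (\<lambda>\<omega>. region_centers \<omega> x S n = T')"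
    using Suc .
  show ?case unfolding eq
  proof (rule pred_intros_finite)
    show "finite (Pow S)" using assms by simp
  next
    fix T' assume T': "T' \<in> Pow S"
    have [measurable]: "Measurable.pred (cutsM d a b) (\<lambda>\<omega>. refine (\<omega> n) x T' = T)"
      using T' by measurable
    show "Measurable.pred (cutsM d a b) (\<lambda>\<omega>. region_centers \<omega> x S n = T' \<and> refine (\<omega> n) x T' = T)"
      by measurable
  qed
qed

definition Qf :: "((nat \<Rightarrow> real) \<Rightarrow> real) \<Rightarrow> (nat \<Rightarrow> real) \<Rightarrow> (nat \<Rightarrow> real) set \<Rightarrow> (nat \<Rightarrow> nat \<times> real) \<Rightarrow> real" where
  "Qf h x S \<omega> = (if term_ev \<omega> x S then h (lcv \<omega> x S) else 0)"

lemma Qf_sum: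
  assumes "finite S" "S \<noteq> {}"
  shows "Qf h x S \<omega> = (\<Sum>p\<in>S. if (\<exists>n. region_centers \<omega> x S n = {p}) then h p else 0)"
proof (cases "term_ev \<omega> x S")
  case True
  then obtain n p where np: "region_centers \<omega> x S n = {p}" unfolding term_ev_def by blast
  then have pS: "p \<in> S" using region_subset[of \<omega> x S n] by auto
  have "(\<Sum>q\<in>S. if (\<exists>n. region_centers \<omega> x S n = {q}) then h q else 0) =
        (\<Sum>q\<in>S. if q = p then h q else 0)"
  proof (rule sum.cong)
    fix q assume "q \<in> S"
    have "(\<exists>n. region_centers \<omega> x S n = {q}) \<longleftrightarrow> q = p"
      using region_single_unique[OF assms(2) _ np] np by metis
    then show "(if (\<exists>n. region_centers \<omega> x S n = {q}) then h q else 0) = (if q = p then h q else 0)"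
      by simp
  qed simp
  also have "\<dots> = h p" using pS assms(1) by simp
  finally show ?thesis unfolding Qf_def using True lcv_eq[OF assms(2) np] by simp
next
  case False
  then show ?thesis unfolding Qf_def term_ev_def by auto
qed

lemma Qf_meas:
  assumes "finite S"
  shows "Qf h x S \<in> borel_measurable (cutsM d a b)"
proof (cases "S = {}")
  case True
  then have "Qf h x S = (\<lambda>_. 0)"
    unfolding Qf_def term_ev_def using region_subset[of _ x "{}"]
    by (intro ext) (metis subset_empty insert_not_empty)
  then show ?thesis by simp
next
  case False
  have [measurable]: "\<And>p. Measurable.pred (cutsM d a b) (\<lambda>\<omega>. region_centers \<omega> x S n = {p})" for n
    using pred_region[OF assms] .
  have eq: "Qf h x S = (\<lambda>\<omega>. \<Sum>p\<in>S. if (\<exists>n. region_centers \<omega> x S n = {p}) then h p else 0)"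
    using Qf_sum[OF assms False] by (intro ext) simp
  show ?thesis unfolding eq by measurable
qed

lemma Qf_bound:
  assumes "finite S"
  shows "\<bar>Qf h x S \<omega>\<bar> \<le> (\<Sum>p\<in>S. \<bar>h p\<bar>)"
proof (cases "term_ev \<omega> x S")
  case True
  then obtain n p where np: "region_centers \<omega> x S n = {p}" unfolding term_ev_def by blast
  then have pS: "p \<in> S" using region_subset[of \<omega> x S n] by auto
  have "S \<noteq> {}" using pS by auto
  then have "Qf h x S \<omega> = h p" unfolding Qf_def using True lcv_eq[OF _ np] by simp
  then show ?thesis using member_le_sum[OF pS, of "\<lambda>p. \<bar>h p\<bar>"] assms by simp
next
  case False
  then show ?thesis unfolding Qf_def by (simp add: sum_nonneg)
qed

lemma prob_cutM: "0 < d \<Longrightarrow> a < b \<Longrightarrow> prob_space (cutM d a b)"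
  unfolding cutM_def
  by (intro prob_space_pair prob_space_uniform_count_measure prob_space_uniform_measure) auto

lemma seq_cut: "0 < d \<Longrightarrow> a < b \<Longrightarrow> sequence_space (cutM d a b)"
  unfolding sequence_space_def product_prob_space_def product_prob_space_axioms_def
    product_sigma_finite_def
  using prob_cutM prob_space_imp_sigma_finite by auto

lemma prob_cutsM: "0 < d \<Longrightarrow> a < b \<Longrightarrow> prob_space (cutsM d a b)"
proof -
  assume "0 < d" "a < b"
  then interpret sequence_space "cutM d a b" by (rule seq_cut)
  show ?thesis unfolding cutsM_def by (rule P.prob_space_axioms)
qed


definition Vt :: "nat \<Rightarrow> real \<Rightarrow> real \<Rightarrow> (nat \<Rightarrow> real) \<Rightarrow> (nat \<Rightarrow> real) set \<Rightarrow> ((nat \<Rightarrow> real) \<Rightarrow> real) \<Rightarrow> real" where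
  "Vt d a b x S h = integral\<^sup>L (cutsM d a b) (Qf h x S)"

lemma Qf_shift:
  assumes "S \<noteq> {}"
  shows "Qf h x S (case_nat s \<omega>) = Qf h x (refine s x S) \<omega>"
proof -
  have e: "(\<lambda>k. case_nat s \<omega> (Suc k)) = \<omega>" by simp
  show ?thesis
    unfolding Qf_def
    using term_ev_shift[OF assms, of "case_nat s \<omega>" x] lcv_shift[OF assms, of "case_nat s \<omega>" x]
    by (simp only: e nat.case(1))
qed

lemma integrable_Qf:
  assumes "prob_space M" "finite S" "Qf h x S \<in> borel_measurable M"
  shows "integrable M (Qf h x S)"
proof -
  interpret prob_space M by fact
  show ?thesis
    by (rule integrable_const_bound[where B="\<Sum>p\<in>S. \<bar>h p\<bar>"]) (use Qf_bound[OF assms(2)] assms(3) in auto)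
qed

lemma Vt_step:
  assumes "0 < d" "a < b" "finite S" "S \<noteq> {}"
  shows "Vt d a b x S h = (\<integral>c. Vt d a b x (refine c x S) h \<partial>cutM d a b)"
proof -
  interpret sequence_space "cutM d a b" using assms by (intro seq_cut)
  have pp: "prob_space (cutM d a b)" "prob_space (cutsM d a b)"
    using assms by (simp_all add: prob_cutM prob_cutsM)
  interpret PS: pair_sigma_finite "cutM d a b" "cutsM d a b"
    unfolding pair_sigma_finite_def using pp by (simp add: prob_space_imp_sigma_finite)
  have mQ[measurable]: "Qf h x S \<in> borel_measurable (cutsM d a b)" using Qf_meas[OF assms(3)] .
  have mc[measurable]: "(\<lambda>(s, \<omega>). case_nat s \<omega>) \<in> measurable (cutM d a b \<Otimes>\<^sub>M cutsM d a b) (cutsM d a b)"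
    unfolding cutsM_def by measurable
  have m2: "(\<lambda>z. Qf h x S ((\<lambda>(s, \<omega>). case_nat s \<omega>) z)) \<in> borel_measurable (cutM d a b \<Otimes>\<^sub>M cutsM d a b)"
    by measurable
  have eq: "(\<lambda>z. Qf h x S ((\<lambda>(s, \<omega>). case_nat s \<omega>) z)) = (\<lambda>(s, \<omega>). Qf h x (refine s x S) \<omega>)"
    by (auto simp: Qf_shift[OF assms(4)])
  have "prob_space (cutM d a b \<Otimes>\<^sub>M cutsM d a b)"
    using assms by (intro prob_space_pair prob_cutM prob_cutsM)
  then interpret PP: prob_space "cutM d a b \<Otimes>\<^sub>M cutsM d a b" .
  have intg: "integrable (cutM d a b \<Otimes>\<^sub>M cutsM d a b) (\<lambda>(s, \<omega>). Qf h x (refine s x S) \<omega>)"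
    unfolding eq[symmetric]
    by (rule PP.integrable_const_bound[where B="\<Sum>p\<in>S. \<bar>h p\<bar>"]) (use Qf_bound[OF assms(3)] m2 in auto)
  have "Vt d a b x S h = integral\<^sup>L (distr (cutM d a b \<Otimes>\<^sub>M cutsM d a b) (cutsM d a b) (\<lambda>(s, \<omega>). case_nat s \<omega>)) (Qf h x S)"
    unfolding Vt_def cutsM_def PiM_iter ..
  also have "\<dots> = integral\<^sup>L (cutM d a b \<Otimes>\<^sub>M cutsM d a b) (\<lambda>z. Qf h x S ((\<lambda>(s, \<omega>). case_nat s \<omega>) z))"
    by (rule integral_distr[OF mc mQ])
  also have "\<dots> = integral\<^sup>L (cutM d a b \<Otimes>\<^sub>M cutsM d a b) (\<lambda>(s, \<omega>). Qf h x (refine s x S) \<omega>)"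
    unfolding eq ..
  also have "\<dots> = (\<integral>s. (\<integral>\<omega>. Qf h x (refine s x S) \<omega> \<partial>cutsM d a b) \<partial>cutM d a b)"
    using PS.integral_fst'[OF intg] by simp
  finally show ?thesis unfolding Vt_def by simp
qed


lemma um_eq:
  fixes a b :: real
  assumes "a < b"
  shows "uniform_measure lborel {a..b} = density lborel (\<lambda>\<theta>. ennreal (indicator {a..b} \<theta> / (b - a)))"
proof -
  have "(\<lambda>\<theta>. (indicator {a..b} \<theta> :: ennreal) / emeasure lborel {a..b}) = (\<lambda>\<theta>. ennreal (indicator {a..b} \<theta> / (b - a)))"
  proof
    fix \<theta>
    have "emeasure lborel {a..b} = ennreal (b - a)" using assms by simp
    then show "(indicator {a..b} \<theta> :: ennreal) / emeasure lborel {a..b} = ennreal (indicator {a..b} \<theta> / (b - a))"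
      using assms by (auto simp: indicator_def divide_ennreal[symmetric] ennreal_1[symmetric] simp del: ennreal_1)
  qed
  then show ?thesis unfolding uniform_measure_def by simp
qed

lemma integral_um:
  fixes a b :: real and f :: "real \<Rightarrow> real"
  assumes "a < b" and f: "f \<in> borel_measurable borel"
  shows "integral\<^sup>L (uniform_measure lborel {a..b}) f = (\<integral>\<theta>. indicator {a..b} \<theta> * f \<theta> \<partial>lborel) / (b - a)"
proof -
  have fm: "f \<in> borel_measurable lborel" using f by simp
  have "integral\<^sup>L (uniform_measure lborel {a..b}) f =
      integral\<^sup>L (density lborel (\<lambda>\<theta>. ennreal (indicator {a..b} \<theta> / (b - a)))) f"
    using um_eq[OF assms(1)] by simp
  also have "\<dots> = (\<integral>\<theta>. (indicator {a..b} \<theta> / (b - a)) *\<^sub>R f \<theta> \<partial>lborel)"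
    by (rule integral_density) (use fm assms(1) in auto)
  also have "\<dots> = (\<integral>\<theta>. (indicator {a..b} \<theta> * f \<theta>) / (b - a) \<partial>lborel)"
    by simp
  also have "\<dots> = (\<integral>\<theta>. indicator {a..b} \<theta> * f \<theta> \<partial>lborel) / (b - a)"
    by (rule integral_divide_zero)
  finally show ?thesis .
qed

lemma pair_i_meas:
  assumes "i < d"
  shows "(\<lambda>\<theta>. (i, \<theta>)) \<in> measurable borel (cutM d a b)"
  unfolding measurable_cong_sets[OF refl sets_cutM]
  by (rule measurable_Pair) (use assms in auto)

lemma cutM_integral:
  assumes "0 < d" "a < b" and G: "G \<in> borel_measurable (cutM d a b)"
    and B: "\<And>c. c \<in> space (cutM d a b) \<Longrightarrow> \<bar>G c\<bar> \<le> B"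
  shows "integral\<^sup>L (cutM d a b) G = (\<Sum>i<d. \<integral>\<theta>. indicator {a..b} \<theta> * G (i, \<theta>) \<partial>lborel) / (d * (b - a))"
proof -
  let ?UC = "uniform_count_measure {..<d}" and ?UM = "uniform_measure lborel {a..b}"
  have p1: "prob_space ?UC" using assms by (intro prob_space_uniform_count_measure) auto
  have p2: "prob_space ?UM" using assms by (intro prob_space_uniform_measure) auto
  interpret PS: pair_sigma_finite ?UC ?UM
    unfolding pair_sigma_finite_def using p1 p2 by (simp add: prob_space_imp_sigma_finite)
  interpret PC: prob_space "cutM d a b" using prob_cutM assms by blast
  have int: "integrable (?UC \<Otimes>\<^sub>M ?UM) G"
    unfolding cutM_def[symmetric]
    by (rule PC.integrable_const_bound[where B=B]) (use G B in auto)
  have "integral\<^sup>L (cutM d a b) G = (\<integral>i. (\<integral>\<theta>. G (i, \<theta>) \<partial>?UM) \<partial>?UC)"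
    unfolding cutM_def using PS.integral_fst'[OF int] by simp
  also have "\<dots> = (\<Sum>i<d. (\<integral>\<theta>. G (i, \<theta>) \<partial>?UM)) / d"
    by (simp add: integral_uniform_count_measure)
  also have "\<dots> = (\<Sum>i<d. (\<integral>\<theta>. indicator {a..b} \<theta> * G (i, \<theta>) \<partial>lborel) / (b - a)) / d"
  proof -
    have "\<And>i. i \<in> {..<d} \<Longrightarrow> (\<integral>\<theta>. G (i, \<theta>) \<partial>?UM) = (\<integral>\<theta>. indicator {a..b} \<theta> * G (i, \<theta>) \<partial>lborel) / (b - a)"
    proof -
      fix i assume "i \<in> {..<d}"
      then have "(\<lambda>\<theta>. G (i, \<theta>)) \<in> borel_measurable borel"
        using measurable_compose[OF pair_i_meas G] by simp
      then show "?thesis i" by (rule integral_um[OF assms(2)])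
    qed
    then show ?thesis by simp
  qed
  also have "\<dots> = (\<Sum>i<d. \<integral>\<theta>. indicator {a..b} \<theta> * G (i, \<theta>) \<partial>lborel) / (d * (b - a))"
    by (simp add: sum_divide_distrib[symmetric])
  finally show ?thesis .
qed

lemma int_box:
  fixes f :: "real \<Rightarrow> real"
  assumes "f \<in> borel_measurable borel" "\<And>\<theta>. \<bar>f \<theta>\<bar> \<le> B * indicator {a..b} \<theta>"
  shows "integrable lborel f"
proof (rule Bochner_Integration.integrable_bound)
  show "integrable lborel (\<lambda>\<theta>. B * indicator {a..b} \<theta> :: real)"
    by (intro integrable_mult_right integrable_real_indicator) (auto simp: emeasure_lborel_Icc_eq)
  show "f \<in> borel_measurable lborel" using assms(1) by simp
  show "AE x in lborel. norm (f x) \<le> norm (B * indicator {a..b} x :: real)"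
    using assms(2) by (auto intro!: AE_I2 order_trans[OF _ abs_ge_self])
qed


definition Isep :: "nat \<Rightarrow> (nat \<Rightarrow> real) set \<Rightarrow> (nat \<times> real \<Rightarrow> real) \<Rightarrow> real" where
  "Isep d S F = (\<Sum>i<d. \<integral>\<theta>. (if separates (i, \<theta>) S then F (i, \<theta>) else 0) \<partial>lborel)"

lemma Vt_bound:
  assumes "0 < d" "a < b" "finite S"
  shows "\<bar>Vt d a b x S h\<bar> \<le> (\<Sum>p\<in>S. \<bar>h p\<bar>)"
proof -
  interpret P: prob_space "cutsM d a b" using prob_cutsM assms by blast
  have m: "Qf h x S \<in> borel_measurable (cutsM d a b)" by (rule Qf_meas[OF assms(3)])
  have i: "integrable (cutsM d a b) (Qf h x S)" by (rule integrable_Qf[OF P.prob_space_axioms assms(3) m])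
  have bnd: "- (\<Sum>p\<in>S. \<bar>h p\<bar>) \<le> Qf h x S \<omega> \<and> Qf h x S \<omega> \<le> (\<Sum>p\<in>S. \<bar>h p\<bar>)" for \<omega>
    using Qf_bound[OF assms(3), of h x \<omega>] by linarith
  have "Vt d a b x S h \<le> (\<Sum>p\<in>S. \<bar>h p\<bar>)"
    unfolding Vt_def by (rule P.integral_le_const[OF i]) (use bnd in \<open>auto intro!: AE_I2\<close>)
  moreover have "- (\<Sum>p\<in>S. \<bar>h p\<bar>) \<le> Vt d a b x S h"
    unfolding Vt_def by (rule P.integral_ge_const[OF i]) (use bnd in \<open>auto intro!: AE_I2\<close>)
  ultimately show ?thesis by simp
qed

lemma Vt_bound_sub:
  assumes "0 < d" "a < b" "finite S" "T \<subseteq> S"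
  shows "\<bar>Vt d a b x T h\<bar> \<le> (\<Sum>p\<in>S. \<bar>h p\<bar>)"
proof -
  have "finite T" using assms finite_subset by blast
  then have "\<bar>Vt d a b x T h\<bar> \<le> (\<Sum>p\<in>T. \<bar>h p\<bar>)" using Vt_bound assms by blast
  also have "\<dots> \<le> (\<Sum>p\<in>S. \<bar>h p\<bar>)" by (rule sum_mono2) (use assms in auto)
  finally show ?thesis .
qed

lemma F_meas:
  assumes "finite S"
  shows "(\<lambda>c. Vt d' a' b' x (refine c x S) h) \<in> borel_measurable (cutM d a b)"
proof -
  have eq: "(\<lambda>c. Vt d' a' b' x (refine c x S) h) =
     (\<lambda>c. \<Sum>T\<in>Pow S. (if refine c x S = T then Vt d' a' b' x T h else 0))"
  proof
    fix c
    have "refine c x S \<in> Pow S" using refine_subset by auto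
    then show "Vt d' a' b' x (refine c x S) h = (\<Sum>T\<in>Pow S. (if refine c x S = T then Vt d' a' b' x T h else 0))"
      using assms by (simp add: sum.delta)
  qed
  have [measurable]: "\<And>T. Measurable.pred (cutM d a b) (\<lambda>c. refine c x S = T)"
    using pred_refine_eq[OF assms] .
  show ?thesis unfolding eq by measurable
qed

lemma sep_in_box:
  assumes "separates (i, \<theta>) S" "\<forall>p\<in>S. in_box d a b p" "i < d"
  shows "\<theta> \<in> {a..b}"
  using assms unfolding separates_def in_box_def by force

lemma int_sep:
  fixes g :: "real \<Rightarrow> real"
  assumes "finite S" "\<forall>p\<in>S. in_box d a b p" "i < d"
    and g: "g \<in> borel_measurable borel" and gb: "\<And>\<theta>. \<bar>g \<theta>\<bar> \<le> B"
  shows "integrable lborel (\<lambda>\<theta>. if separates (i, \<theta>) S then g \<theta> else 0)"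
proof (rule int_box)
  have [measurable]: "Measurable.pred borel (\<lambda>\<theta>::real. separates (i,\<theta>) S)"
    using assms(1) by (rule pred_sep)
  show "(\<lambda>\<theta>. if separates (i, \<theta>) S then g \<theta> else 0) \<in> borel_measurable borel"
    using g by measurable
  fix \<theta>
  show "\<bar>if separates (i, \<theta>) S then g \<theta> else 0\<bar> \<le> B * indicator {a..b} \<theta>"
    using sep_in_box[OF _ assms(2,3), of \<theta>] gb[of \<theta>] by (auto simp: indicator_def)
qed

lemma Vt_rec:
  assumes d: "0 < d" and ab: "a < b" and fin: "finite S" and ne: "S \<noteq> {}"
    and box: "\<forall>p\<in>S. in_box d a b p"
  shows "Vt d a b x S h * Isep d S (\<lambda>_. 1) = Isep d S (\<lambda>c. Vt d a b x (refine c x S) h)"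
proof -
  define B where "B = (\<Sum>p\<in>S. \<bar>h p\<bar>)"
  define F where "F = (\<lambda>c. Vt d a b x (refine c x S) h)"
  define V where "V = Vt d a b x S h"
  define A where "A = (\<lambda>i. \<integral>\<theta>. (if separates (i, \<theta>) S then F (i, \<theta>) else 0) \<partial>lborel)"
  define C where "C = (\<lambda>i. \<integral>\<theta>. (if separates (i, \<theta>) S then 1 else 0 :: real) \<partial>lborel)"
  have Fm: "F \<in> borel_measurable (cutM d a b)" unfolding F_def by (rule F_meas[OF fin])
  have Fb: "\<bar>F c\<bar> \<le> B" for c unfolding F_def B_def by (rule Vt_bound_sub[OF d ab fin refine_subset])
  have Fi: "(\<lambda>\<theta>. F (i, \<theta>)) \<in> borel_measurable borel" if "i < d" for i
    using measurable_compose[OF pair_i_meas[OF that] Fm] by simp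
  have "V = integral\<^sup>L (cutM d a b) F" unfolding V_def F_def by (rule Vt_step[OF d ab fin ne])
  also have "\<dots> = (\<Sum>i<d. \<integral>\<theta>. indicator {a..b} \<theta> * F (i, \<theta>) \<partial>lborel) / (d * (b - a))"
    by (rule cutM_integral[OF d ab Fm]) (rule Fb)
  also have "(\<Sum>i<d. \<integral>\<theta>. indicator {a..b} \<theta> * F (i, \<theta>) \<partial>lborel) = (\<Sum>i<d. A i + ((b - a) - C i) * V)"
  proof (rule sum.cong[OF refl])
    fix i assume "i \<in> {..<d}" then have i: "i < d" by simp
    have pw: "indicator {a..b} \<theta> * F (i, \<theta>) = (if separates (i, \<theta>) S then F (i, \<theta>) else 0) +
        (indicator {a..b} \<theta> - (if separates (i, \<theta>) S then 1 else 0)) * V" for \<theta>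
    proof (cases "separates (i, \<theta>) S")
      case True
      then have "\<theta> \<in> {a..b}" using sep_in_box[OF _ box i] by blast
      then show ?thesis using True by simp
    next
      case False
      then have "F (i, \<theta>) = V" unfolding F_def V_def by (simp add: refine_not_sep)
      then show ?thesis using False by (simp add: algebra_simps)
    qed
    have I1: "integrable lborel (\<lambda>\<theta>. if separates (i, \<theta>) S then F (i, \<theta>) else 0)"
      by (rule int_sep[OF fin box i Fi[OF i] Fb])
    have I2: "integrable lborel (\<lambda>\<theta>. if separates (i, \<theta>) S then 1 else 0 :: real)"
      by (rule int_sep[OF fin box i, where B=1]) auto
    have I3: "integrable lborel (indicator {a..b} :: real \<Rightarrow> real)"
      by (auto simp: emeasure_lborel_Icc_eq)
    have I4: "integrable lborel (\<lambda>\<theta>. (indicator {a..b} \<theta> - (if separates (i, \<theta>) S then 1 else 0)) * V)"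
      by (rule integrable_mult_left, rule Bochner_Integration.integrable_diff[OF I3 I2])
    have "(\<integral>\<theta>. indicator {a..b} \<theta> * F (i, \<theta>) \<partial>lborel) =
        (\<integral>\<theta>. (if separates (i, \<theta>) S then F (i, \<theta>) else 0) +
        (indicator {a..b} \<theta> - (if separates (i, \<theta>) S then 1 else 0)) * V \<partial>lborel)"
      by (simp only: pw)
    also have "\<dots> = A i + (\<integral>\<theta>. (indicator {a..b} \<theta> - (if separates (i, \<theta>) S then 1 else 0)) * V \<partial>lborel)"
      unfolding A_def by (rule Bochner_Integration.integral_add[OF I1 I4])
    also have "(\<integral>\<theta>. (indicator {a..b} \<theta> - (if separates (i, \<theta>) S then 1 else 0)) * V \<partial>lborel) =
        ((\<integral>\<theta>. indicator {a..b} \<theta> \<partial>lborel) - C i) * V"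
      unfolding C_def by (simp add: Bochner_Integration.integral_diff[OF I3 I2])
    also have "(\<integral>\<theta>. indicator {a..b} \<theta> \<partial>lborel) = b - a"
      using ab by simp
    finally show "(\<integral>\<theta>. indicator {a..b} \<theta> * F (i, \<theta>) \<partial>lborel) = A i + ((b - a) - C i) * V" .
  qed
  also have "(\<Sum>i<d. A i + ((b - a) - C i) * V) = (\<Sum>i<d. A i) + d * (b - a) * V - (\<Sum>i<d. C i) * V"
    by (simp add: sum.distrib sum_subtractf sum_distrib_right left_diff_distrib)
  finally have eq: "V = ((\<Sum>i<d. A i) + d * (b - a) * V - (\<Sum>i<d. C i) * V) / (d * (b - a))" .
  have pos: "d * (b - a) > 0" using d ab by simp
  from eq pos have "V * (d * (b - a)) = (\<Sum>i<d. A i) + d * (b - a) * V - (\<Sum>i<d. C i) * V"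
  proof -
    have "real d * (b - a) \<noteq> 0" using d ab by simp
    from nonzero_eq_divide_eq[OF this] eq show ?thesis by blast
  qed
  then have "V * (\<Sum>i<d. C i) = (\<Sum>i<d. A i)" by (simp add: algebra_simps)
  then show ?thesis unfolding Isep_def A_def C_def V_def F_def by simp
qed


lemma Vt_single:
  assumes "0 < d" "a < b"
  shows "Vt d a b x {p} h = h p"
proof -
  interpret P: prob_space "cutsM d a b" using prob_cutsM assms by blast
  have "Qf h x {p} \<omega> = h p" for \<omega>
  proof -
    have r: "region_centers \<omega> x {p} 0 = {p}" by simp
    then have "term_ev \<omega> x {p}" by (rule term_evI)
    then show ?thesis unfolding Qf_def using lcv_eq[OF _ r] by simp
  qed
  then have "Qf h x {p} = (\<lambda>_. h p)" by auto
  then show ?thesis unfolding Vt_def by (simp add: P.prob_space)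
qed

lemma pts_diff_coord:
  assumes "p \<in> pts d" "q \<in> pts d" "p \<noteq> q"
  shows "\<exists>i<d. p i \<noteq> q i"
proof (rule ccontr)
  assume nt: "\<not> (\<exists>i<d. p i \<noteq> q i)"
  have "p i = q i" for i
  proof (cases "i < d")
    case True then show ?thesis using nt by blast
  next
    case False then show ?thesis using assms(1,2) unfolding pts_def by simp
  qed
  then show False using assms(3) by auto
qed

lemma Isep1_pos:
  assumes fin: "finite S" and box: "\<forall>p\<in>S. in_box d a b p" and pts: "S \<subseteq> pts d"
    and pq: "p \<in> S" "q \<in> S" "p \<noteq> q"
  shows "Isep d S (\<lambda>_. 1) > 0"
proof -
  have "p \<in> pts d" "q \<in> pts d" using pq pts by auto
  then obtain i where i: "i < d" "p i \<noteq> q i" using pts_diff_coord[of p d q] pq(3) by blast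
  obtain u v where uv: "u \<in> S" "v \<in> S" "u i < v i"
  proof (cases "p i < q i")
    case True then show ?thesis using that pq by blast
  next
    case False then have "q i < p i" using i(2) by simp
    then show ?thesis using that pq by blast
  qed
  define C where "C = (\<lambda>j. \<integral>\<theta>. (if separates (j, \<theta>) S then 1 else 0 :: real) \<partial>lborel)"
  have Cnn: "C j \<ge> 0" for j unfolding C_def by (rule Bochner_Integration.integral_nonneg) auto
  have I2: "integrable lborel (\<lambda>\<theta>. if separates (i, \<theta>) S then 1 else 0 :: real)"
    by (rule int_sep[OF fin box i(1), where B=1]) auto
  have I1: "integrable lborel (indicator {u i..<v i} :: real \<Rightarrow> real)"
    using uv by (intro integrable_real_indicator) auto
  have "v i - u i = (\<integral>\<theta>. indicator {u i..<v i} \<theta> \<partial>lborel)"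
    using uv by simp
  also have "\<dots> \<le> C i" unfolding C_def
  proof (rule integral_mono[OF I1 I2])
    fix \<theta>
    show "indicator {u i..<v i} \<theta> \<le> (if separates (i, \<theta>) S then 1 else 0 :: real)"
      using uv unfolding separates_def by (auto simp: indicator_def)
  qed
  finally have "C i > 0" using uv by simp
  also have "C i \<le> (\<Sum>j<d. C j)" by (rule member_le_sum) (use i Cnn in auto)
  finally show ?thesis unfolding Isep_def C_def by simp
qed

lemma Vt_rec2:
  assumes d: "0 < d" and ab: "a < b" and fin: "finite S"
    and box: "\<forall>p\<in>S. in_box d a b p" and pts: "S \<subseteq> pts d" and two: "\<not> (\<exists>p. S \<subseteq> {p})"
  shows "Vt d a b x S h = Isep d S (\<lambda>c. Vt d a b x (refine c x S) h) / Isep d S (\<lambda>_. 1)"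
proof -
  obtain p q where pq: "p \<in> S" "q \<in> S" "p \<noteq> q" using two by blast
  have pos: "Isep d S (\<lambda>_. 1) > 0" by (rule Isep1_pos[OF fin box pts pq])
  have ne: "S \<noteq> {}" using pq by auto
  show ?thesis using Vt_rec[OF d ab fin ne box, of x h] pos by (simp add: eq_divide_eq)
qed


definition phi :: "nat \<Rightarrow> (nat \<Rightarrow> real) \<Rightarrow> real \<Rightarrow> (nat \<Rightarrow> real) \<Rightarrow> (nat \<Rightarrow> real)" where
  "phi d x m p = (\<lambda>i. if i < d then (p i - x i) / m else 0)"

lemma phi_pts: "phi d x m p \<in> pts d"
  unfolding phi_def pts_def by auto

lemma phi_inj:
  assumes "m > 0"
  shows "inj_on (phi d x m) (pts d)"
proof (rule inj_onI)
  fix p q assume pq: "p \<in> pts d" "q \<in> pts d" "phi d x m p = phi d x m q"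
  show "p = q"
  proof (rule ccontr)
    assume "p \<noteq> q"
    then obtain i where i: "i < d" "p i \<noteq> q i" using pts_diff_coord pq by blast
    have "phi d x m p i = phi d x m q i" using pq by simp
    then have "(p i - x i) / m = (q i - x i) / m" using i unfolding phi_def by simp
    then have "p i = q i" using assms by (simp add: divide_cancel_right)
    then show False using i by simp
  qed
qed

lemma phi_le:
  assumes "m > 0" "i < d"
  shows "(phi d x m p i \<le> (\<theta> - x i) / m) \<longleftrightarrow> p i \<le> \<theta>"
    and "(phi d x m p i < (\<theta> - x i) / m) \<longleftrightarrow> p i < \<theta>"
    and "((\<theta> - x i) / m < phi d x m p i) \<longleftrightarrow> \<theta> < p i"
    and "(0 \<le> (\<theta> - x i) / m) \<longleftrightarrow> x i \<le> \<theta>"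
  using assms unfolding phi_def by (auto simp: divide_le_cancel divide_less_cancel zero_le_divide_iff)

lemma sep_phi:
  assumes "m > 0" "i < d"
  shows "separates (i, (\<theta> - x i) / m) (phi d x m ` S) \<longleftrightarrow> separates (i, \<theta>) S"
  unfolding separates_def using phi_le[OF assms] by auto

lemma refine_phi:
  assumes "m > 0" "i < d"
  shows "refine (i, (\<theta> - x i) / m) (\<lambda>_. 0) (phi d x m ` S) = phi d x m ` refine (i, \<theta>) x S"
proof (cases "separates (i, \<theta>) S")
  case True
  then have s: "separates (i, (\<theta> - x i) / m) (phi d x m ` S)" using sep_phi[OF assms] by simp
  show ?thesis
    unfolding refine_def using True s phi_le[OF assms] by auto
next
  case False
  then have s: "\<not> separates (i, (\<theta> - x i) / m) (phi d x m ` S)" using sep_phi[OF assms] by simp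
  show ?thesis using False s by (simp add: refine_not_sep)
qed

lemma Isep_aff:
  assumes m: "m > 0"
    and G: "\<And>i \<theta>. i < d \<Longrightarrow> separates (i, \<theta>) S \<Longrightarrow> G (i, \<theta>) = G' (i, (\<theta> - x i) / m)"
  shows "Isep d (phi d x m ` S) G' = Isep d S G / m"
proof -
  have "(\<integral>\<theta>'. (if separates (i, \<theta>') (phi d x m ` S) then G' (i, \<theta>') else 0) \<partial>lborel) =
      (\<integral>\<theta>. (if separates (i, \<theta>) S then G (i, \<theta>) else 0) \<partial>lborel) / m" if i: "i < d" for i
  proof -
    let ?g = "\<lambda>\<theta>. (if separates (i, \<theta>) S then G (i, \<theta>) else 0)"
    have "(\<integral>\<theta>. ?g \<theta> \<partial>lborel) = \<bar>m\<bar> *\<^sub>R (\<integral>\<theta>'. ?g (x i + m * \<theta>') \<partial>lborel)"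
      by (rule lborel_integral_real_affine) (use m in simp)
    also have "(\<lambda>\<theta>'. ?g (x i + m * \<theta>')) = (\<lambda>\<theta>'. (if separates (i, \<theta>') (phi d x m ` S) then G' (i, \<theta>') else 0))"
    proof
      fix \<theta>'
      have e: "((x i + m * \<theta>') - x i) / m = \<theta>'" using m by simp
      have "separates (i, \<theta>') (phi d x m ` S) \<longleftrightarrow> separates (i, x i + m * \<theta>') S"
        using sep_phi[OF m i, of "x i + m * \<theta>'" x S] e by simp
      moreover have "separates (i, x i + m * \<theta>') S \<Longrightarrow> G (i, x i + m * \<theta>') = G' (i, \<theta>')"
        using G[OF i, of "x i + m * \<theta>'"] e by simp
      ultimately show "?g (x i + m * \<theta>') = (if separates (i, \<theta>') (phi d x m ` S) then G' (i, \<theta>') else 0)"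
        by simp
    qed
    finally show ?thesis using m by simp
  qed
  then show ?thesis unfolding Isep_def by (simp add: sum_divide_distrib)
qed


lemma transfer:
  assumes d: "0 < d" and ab: "a < b" and ab': "a' < b'" and m: "m > 0"
  shows "finite S \<Longrightarrow> S \<noteq> {} \<Longrightarrow> S \<subseteq> pts d \<Longrightarrow> \<forall>p\<in>S. in_box d a b p \<Longrightarrow>
    \<forall>p\<in>S. in_box d a' b' (phi d x m p) \<Longrightarrow> \<forall>p\<in>S. h p = h' (phi d x m p) \<Longrightarrow>
    Vt d a b x S h = Vt d a' b' (\<lambda>_. 0) (phi d x m ` S) h'"
proof (induction "card S" arbitrary: S rule: less_induct)
  case less
  note fin = less.prems(1) and ne = less.prems(2) and pts = less.prems(3) and box = less.prems(4)
    and box' = less.prems(5) and hh = less.prems(6)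
  show ?case
  proof (cases "\<exists>p. S \<subseteq> {p}")
    case True
    then obtain p where "S \<subseteq> {p}" by blast
    then have S: "S = {p}" using ne by blast
    show ?thesis unfolding S using Vt_single[OF d ab] Vt_single[OF d ab'] hh S by simp
  next
    case False
    let ?T = "phi d x m ` S"
    have finT: "finite ?T" using fin by simp
    have ptsT: "?T \<subseteq> pts d" using phi_pts by blast
    have boxT: "\<forall>p\<in>?T. in_box d a' b' p" using box' by blast
    have twoT: "\<not> (\<exists>p. ?T \<subseteq> {p})"
    proof
      assume "\<exists>p. ?T \<subseteq> {p}"
      then obtain r where r: "?T \<subseteq> {r}" by blast
      obtain p q where pq: "p \<in> S" "q \<in> S" "p \<noteq> q" using False ne by blast
      have "phi d x m p = phi d x m q" using r pq by blast
      then have "p = q" using phi_inj[OF m] pq pts by (meson inj_onD subsetD)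
      then show False using pq by simp
    qed
    define G where "G = (\<lambda>c. Vt d a b x (refine c x S) h)"
    define G' where "G' = (\<lambda>c. Vt d a' b' (\<lambda>_. 0) (refine c (\<lambda>_. 0) ?T) h')"
    have e1: "Vt d a b x S h = Isep d S G / Isep d S (\<lambda>_. 1)"
      unfolding G_def by (rule Vt_rec2[OF d ab fin box pts False])
    have e2: "Vt d a' b' (\<lambda>_. 0) ?T h' = Isep d ?T G' / Isep d ?T (\<lambda>_. 1)"
      unfolding G'_def by (rule Vt_rec2[OF d ab' finT boxT ptsT twoT])
    have i1: "Isep d ?T (\<lambda>_. 1) = Isep d S (\<lambda>_. 1) / m"
      by (rule Isep_aff[OF m]) simp
    have i2: "Isep d ?T G' = Isep d S G / m"
    proof (rule Isep_aff[OF m])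
      fix i \<theta> assume i: "i < d" and sep: "separates (i, \<theta>) S"
      let ?R = "refine (i, \<theta>) x S"
      have sub: "?R \<subset> S" by (rule refine_psubset[OF sep])
      have "card ?R < card S" using psubset_card_mono[OF fin sub] .
      moreover have "finite ?R" using fin sub finite_subset by blast
      moreover have "?R \<noteq> {}" using refine_nonempty[OF ne] .
      moreover have "?R \<subseteq> pts d" using sub pts by blast
      moreover have "\<forall>p\<in>?R. in_box d a b p" using sub box by blast
      moreover have "\<forall>p\<in>?R. in_box d a' b' (phi d x m p)" using sub box' by blast
      moreover have "\<forall>p\<in>?R. h p = h' (phi d x m p)" using sub hh by blast
      ultimately have IH: "Vt d a b x ?R h = Vt d a' b' (\<lambda>_. 0) (phi d x m ` ?R) h'"
        using less.hyps by blast
      show "G (i, \<theta>) = G' (i, (\<theta> - x i) / m)"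
        unfolding G_def G'_def refine_phi[OF m i] using IH .
    qed
    have "Isep d S (\<lambda>_. 1) > 0"
    proof -
      obtain p q where pq: "p \<in> S" "q \<in> S" "p \<noteq> q" using False ne by blast
      show ?thesis by (rule Isep1_pos[OF fin box pts pq])
    qed
    then show ?thesis unfolding e1 e2 i1 i2 using m by (simp add: field_simps)
  qed
qed


lemma Isep_cong:
  assumes "\<And>i \<theta>. i < d \<Longrightarrow> separates (i, \<theta>) S \<Longrightarrow> G (i, \<theta>) = G' (i, \<theta>)"
  shows "Isep d S G = Isep d S G'"
  unfolding Isep_def
  by (intro sum.cong refl Bochner_Integration.integral_cong) (use assms in auto)

lemma Vt_one:
  assumes d: "0 < d" and ab: "a < b"
  shows "finite S \<Longrightarrow> S \<noteq> {} \<Longrightarrow> S \<subseteq> pts d \<Longrightarrow> \<forall>p\<in>S. in_box d a b p \<Longrightarrow>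
    Vt d a b x S (\<lambda>_. 1) = 1"
proof (induction "card S" arbitrary: S rule: less_induct)
  case less
  note fin = less.prems(1) and ne = less.prems(2) and pts = less.prems(3) and box = less.prems(4)
  show ?case
  proof (cases "\<exists>p. S \<subseteq> {p}")
    case True
    then obtain p where "S \<subseteq> {p}" by blast
    then have S: "S = {p}" using ne by blast
    show ?thesis unfolding S using Vt_single[OF d ab] by simp
  next
    case False
    obtain p q where pq: "p \<in> S" "q \<in> S" "p \<noteq> q" using False ne by blast
    have pos: "Isep d S (\<lambda>_. 1) > 0" by (rule Isep1_pos[OF fin box pts pq])
    have "Isep d S (\<lambda>c. Vt d a b x (refine c x S) (\<lambda>_. 1)) = Isep d S (\<lambda>_. 1)"
    proof (rule Isep_cong)
      fix i \<theta> assume i: "i < d" and sep: "separates (i, \<theta>) S"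
      let ?R = "refine (i, \<theta>) x S"
      have sub: "?R \<subset> S" by (rule refine_psubset[OF sep])
      have "card ?R < card S" using psubset_card_mono[OF fin sub] .
      moreover have "finite ?R" using fin sub finite_subset by blast
      moreover have "?R \<noteq> {}" using refine_nonempty[OF ne] .
      moreover have "?R \<subseteq> pts d" using sub pts by blast
      moreover have "\<forall>p\<in>?R. in_box d a b p" using sub box by blast
      ultimately show "Vt d a b x ?R (\<lambda>_. 1) = 1" using less.hyps by blast
    qed
    then show ?thesis using Vt_rec2[OF d ab fin box pts False, of x "\<lambda>_. 1"] pos by simp
  qed
qed

lemma term_ev_iff:
  "term_ev \<omega> x S \<longleftrightarrow> (\<exists>n. \<exists>p\<in>S. region_centers \<omega> x S n = {p})"
  unfolding term_ev_def using region_subset by blast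

lemma pred_term:
  assumes "finite S"
  shows "Measurable.pred (cutsM d a b) (\<lambda>\<omega>. term_ev \<omega> x S)"
proof -
  have [measurable]: "\<And>n p. Measurable.pred (cutsM d a b) (\<lambda>\<omega>. region_centers \<omega> x S n = {p})"
    using pred_region[OF assms] .
  show ?thesis unfolding term_ev_iff using assms by measurable
qed

lemma leaf_center_split:
  fixes g :: "(nat \<Rightarrow> real) \<Rightarrow> real"
  shows "g (leaf_center \<omega> x S) = Qf g x S \<omega> + (if term_ev \<omega> x S then 0 else g (SOME p. p \<in> S))"
  unfolding Qf_def by (simp add: leaf_center_term leaf_center_nterm)

lemma lc_meas:
  fixes g :: "(nat \<Rightarrow> real) \<Rightarrow> real"
  assumes "finite S"
  shows "(\<lambda>\<omega>. g (leaf_center \<omega> x S)) \<in> borel_measurable (cutsM d a b)"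
proof -
  have [measurable]: "Measurable.pred (cutsM d a b) (\<lambda>\<omega>. term_ev \<omega> x S)" by (rule pred_term[OF assms])
  have [measurable]: "Qf g x S \<in> borel_measurable (cutsM d a b)" by (rule Qf_meas[OF assms])
  show ?thesis unfolding leaf_center_split by measurable
qed

lemma AE_term:
  assumes d: "0 < d" and ab: "a < b" and fin: "finite S" and ne: "S \<noteq> {}"
    and pts: "S \<subseteq> pts d" and box: "\<forall>p\<in>S. in_box d a b p"
  shows "AE \<omega> in cutsM d a b. term_ev \<omega> x S"
proof -
  interpret P: prob_space "cutsM d a b" using prob_cutsM d ab by blast
  have [measurable]: "Measurable.pred (cutsM d a b) (\<lambda>\<omega>. term_ev \<omega> x S)" by (rule pred_term[OF fin])
  let ?A = "{\<omega> \<in> space (cutsM d a b). term_ev \<omega> x S}"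
  have "integral\<^sup>L (cutsM d a b) (Qf (\<lambda>_. 1) x S) = integral\<^sup>L (cutsM d a b) (indicator ?A)"
    by (rule Bochner_Integration.integral_cong) (auto simp: Qf_def indicator_def)
  also have "\<dots> = P.prob ?A" by simp
  finally have "1 = P.prob ?A"
    using Vt_one[OF d ab fin ne pts box, of x] unfolding Vt_def by simp
  then have "AE \<omega> in cutsM d a b. \<omega> \<in> {\<omega> \<in> space (cutsM d a b). term_ev \<omega> x S}"
    by (intro P.AE_prob_1) simp
  then show ?thesis by auto
qed

lemma integral_lc:
  fixes g :: "(nat \<Rightarrow> real) \<Rightarrow> real"
  assumes d: "0 < d" and ab: "a < b" and fin: "finite S" and ne: "S \<noteq> {}"
    and pts: "S \<subseteq> pts d" and box: "\<forall>p\<in>S. in_box d a b p"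
  shows "(\<integral>\<omega>. g (leaf_center \<omega> x S) \<partial>cutsM d a b) = Vt d a b x S g"
  unfolding Vt_def
proof (rule integral_cong_AE)
  show "(\<lambda>\<omega>. g (leaf_center \<omega> x S)) \<in> borel_measurable (cutsM d a b)" by (rule lc_meas[OF fin])
  show "Qf g x S \<in> borel_measurable (cutsM d a b)" by (rule Qf_meas[OF fin])
  show "AE \<omega> in cutsM d a b. g (leaf_center \<omega> x S) = Qf g x S \<omega>"
    using AE_term[OF assms, of x] by eventually_elim (simp add: leaf_center_split)
qed

lemma integrable_lc:
  fixes g :: "(nat \<Rightarrow> real) \<Rightarrow> real"
  assumes d: "0 < d" and ab: "a < b" and fin: "finite S"
  shows "integrable (cutsM d a b) (\<lambda>\<omega>. g (leaf_center \<omega> x S))"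
proof -
  interpret P: prob_space "cutsM d a b" using prob_cutsM d ab by blast
  have b: "\<bar>g (leaf_center \<omega> x S)\<bar> \<le> (\<Sum>p\<in>S. \<bar>g p\<bar>) + \<bar>g (SOME p. p \<in> S)\<bar>" for \<omega>
    unfolding leaf_center_split using Qf_bound[OF fin, of g x \<omega>] by (auto simp: abs_le_iff)
  show ?thesis
    by (rule P.integrable_const_bound[where B="(\<Sum>p\<in>S. \<bar>g p\<bar>) + \<bar>g (SOME p. p \<in> S)\<bar>"])
       (use b lc_meas[OF fin] in auto)
qed


lemma x_in_region: "x \<in> S \<Longrightarrow> x \<in> region_centers \<omega> x S n"
  by (induction n) (auto simp: refine_def)

lemma Vt_self:
  assumes "x \<in> S" "h x = 0"
  shows "Vt d a b x S h = 0"
proof -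
  have "Qf h x S \<omega> = 0" for \<omega>
  proof (cases "term_ev \<omega> x S")
    case True
    then obtain n p where np: "region_centers \<omega> x S n = {p}" unfolding term_ev_def by blast
    then have "p = x" using x_in_region[OF assms(1), of \<omega> n] by simp
    moreover have "S \<noteq> {}" using assms(1) by auto
    ultimately show ?thesis unfolding Qf_def using True lcv_eq[OF _ np] assms by auto
  qed (simp add: Qf_def)
  then have "Qf h x S = (\<lambda>_. 0)" by (intro ext)
  then show ?thesis unfolding Vt_def by simp
qed

lemma dist1_nonneg: "dist1 d x p \<ge> 0"
  unfolding dist1_def norm1_def by (simp add: sum_nonneg)

lemma norm1_nonneg: "norm1 d p \<ge> 0"
  unfolding norm1_def by (simp add: sum_nonneg)

lemma dist1_self: "dist1 d x x = 0"
  unfolding dist1_def norm1_def by simp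

lemma dist1_pos:
  assumes "x \<in> pts d" "p \<in> pts d" "x \<noteq> p"
  shows "dist1 d x p > 0"
proof -
  obtain i where i: "i < d" "x i \<noteq> p i" using pts_diff_coord[OF assms] by blast
  have "0 < \<bar>x i - p i\<bar>" using i by simp
  also have "\<dots> \<le> (\<Sum>j<d. \<bar>x j - p j\<bar>)" by (rule member_le_sum) (use i in auto)
  finally show ?thesis unfolding dist1_def norm1_def by simp
qed

lemma norm1_phi:
  assumes "m > 0"
  shows "norm1 d (phi d x m p) = dist1 d x p / m"
proof -
  have "norm1 d (phi d x m p) = (\<Sum>i<d. \<bar>x i - p i\<bar> / m)"
    unfolding norm1_def phi_def using assms by (intro sum.cong) (auto simp: abs_minus_commute)
  also have "\<dots> = dist1 d x p / m" unfolding dist1_def norm1_def by (simp add: sum_divide_distrib)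
  finally show ?thesis .
qed

lemma Vt_scale:
  "Vt d a b x S (\<lambda>q. m * h q) = m * Vt d a b x S h"
proof -
  have "Qf (\<lambda>q. m * h q) x S = (\<lambda>\<omega>. m * Qf h x S \<omega>)" unfolding Qf_def by auto
  then show ?thesis unfolding Vt_def by simp
qed

lemma key_point:
  assumes d: "0 < d" and ab: "a < b" and fin: "finite U" and ne: "U \<noteq> {}" and pts: "U \<subseteq> pts d"
    and box: "\<forall>p\<in>U. in_box d a b p" and y: "y \<in> pts d" "in_box d a b y" "y \<notin> U"
  shows "Min (dist1 d y ` U) > 0 \<and> (\<exists>cp. cp \<ge> 0 \<and> ereal cp \<le> alpha (card U) \<and>
           Vt d a b y U (dist1 d y) = Min (dist1 d y ` U) * cp)"
proof -
  define m where "m = Min (dist1 d y ` U)"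
  have m: "m > 0" unfolding m_def using fin ne
    by (subst Min_gr_iff) (use dist1_pos y pts in auto)
  define a' where "a' = - ((b - a) / m)"
  define b' where "b' = (b - a) / m"
  have ab': "a' < b'" unfolding a'_def b'_def using ab m by (simp add: field_simps)
  define U' where "U' = phi d y m ` U"
  have box': "\<forall>p\<in>U. in_box d a' b' (phi d y m p)"
  proof (intro ballI)
    fix p assume p: "p \<in> U"
    show "in_box d a' b' (phi d y m p)" unfolding in_box_def
    proof (intro allI impI)
      fix i assume i: "i < d"
      have "a \<le> p i" "p i \<le> b" "a \<le> y i" "y i \<le> b" using box p y(2) i unfolding in_box_def by auto
      then have "a - b \<le> p i - y i" "p i - y i \<le> b - a" by auto
      then have "(a - b) / m \<le> (p i - y i) / m" "(p i - y i) / m \<le> (b - a) / m"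
        using m by (auto intro: divide_right_mono)
      then show "a' \<le> phi d y m p i \<and> phi d y m p i \<le> b'"
        unfolding a'_def b'_def phi_def using i by (auto simp: minus_divide_left)
    qed
  qed
  have tr: "Vt d a b y U (dist1 d y) = Vt d a' b' (\<lambda>_. 0) U' (\<lambda>q. m * norm1 d q)"
    unfolding U'_def
    by (rule transfer[OF d ab ab' m fin ne pts box box']) (use norm1_phi[OF m] m in auto)
  have finU': "finite U'" "U' \<noteq> {}" "U' \<subseteq> pts d" "\<forall>p\<in>U'. in_box d a' b' p"
    unfolding U'_def using fin ne phi_pts box' by auto
  define cp where "cp = closest_point_value d a' b' U'"
  have cpV: "cp = Vt d a' b' (\<lambda>_. 0) U' (norm1 d)"
    unfolding cp_def closest_point_value_def by (rule integral_lc[OF d ab' finU'])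
  have cpnn: "cp \<ge> 0" unfolding cp_def closest_point_value_def
    by (rule Bochner_Integration.integral_nonneg) (simp add: norm1_nonneg)
  have cardU': "card U' = card U" unfolding U'_def
    by (rule card_image) (rule inj_on_subset[OF phi_inj[OF m] pts])
  have minU': "Min (norm1 d ` U') = 1"
  proof -
    have "norm1 d ` U' = (\<lambda>t. t / m) ` (dist1 d y ` U)"
      unfolding U'_def image_image using norm1_phi[OF m] by simp
    moreover have "Min ((\<lambda>t. t / m) ` (dist1 d y ` U)) = Min (dist1 d y ` U) / m"
      by (rule mono_Min_commute[symmetric]) (use fin ne m in \<open>auto simp: mono_def divide_right_mono\<close>)
    ultimately show ?thesis using m unfolding m_def by simp
  qed
  have box0: "in_box d a' b' (\<lambda>_. 0)" unfolding in_box_def a'_def b'_def using ab m by simp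
  have "ereal cp \<le> alpha (card U)"
    unfolding alpha_def cp_def
    by (rule SUP_upper2[where i="(d, a', b', U')"])
       (use d ab' finU' cardU' minU' box0 in auto)
  moreover have "Vt d a b y U (dist1 d y) = m * cp"
    unfolding tr cpV Vt_scale ..
  ultimately show ?thesis using m cpnn unfolding m_def by blast
qed


lemma exists_outside:
  assumes d: "0 < d" and ab: "a < b" and fin: "finite U"
  shows "\<exists>y. y \<in> pts d \<and> in_box d a b y \<and> y \<notin> U"
proof -
  define f where "f = (\<lambda>c::real. (\<lambda>i. if i < d then c else 0 :: real))"
  have inj: "inj_on f {a..b}"
  proof (rule inj_onI)
    fix c c' assume "f c = f c'"
    then have "f c 0 = f c' 0" by simp
    then show "c = c'" using d unfolding f_def by simp
  qed
  have "infinite (f ` {a..b})" using inj infinite_Icc[OF ab] by (simp add: finite_image_iff)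
  then have "\<not> (f ` {a..b} \<subseteq> U)" using fin finite_subset by blast
  then obtain c where c: "c \<in> {a..b}" "f c \<notin> U" by blast
  have "f c \<in> pts d" unfolding f_def pts_def by simp
  moreover have "in_box d a b (f c)" unfolding f_def in_box_def using c by simp
  ultimately show ?thesis using c by blast
qed

lemma alpha_nonneg:
  assumes d: "0 < d" and ab: "a < b" and fin: "finite U" and ne: "U \<noteq> {}" and pts: "U \<subseteq> pts d"
    and box: "\<forall>p\<in>U. in_box d a b p"
  shows "alpha (card U) \<ge> 0"
proof -
  obtain y where y: "y \<in> pts d" "in_box d a b y" "y \<notin> U" using exists_outside[OF d ab fin] by blast
  obtain cp where "cp \<ge> 0" "ereal cp \<le> alpha (card U)"
    using key_point[OF d ab fin ne pts box y] by blast
  then show ?thesis by (meson ereal_less_eq(5) order_trans)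
qed

lemma pt_bound:
  assumes d: "0 < d" and ab: "a < b" and fin: "finite U" and ne: "U \<noteq> {}" and pts: "U \<subseteq> pts d"
    and box: "\<forall>p\<in>U. in_box d a b p" and x: "x \<in> pts d" "in_box d a b x" and q: "q \<in> U"
  shows "ereal (Vt d a b x U (dist1 d x)) \<le> alpha (card U) * ereal (dist1 d x q)"
proof (cases "x \<in> U")
  case True
  have "Vt d a b x U (dist1 d x) = 0" by (rule Vt_self[OF True dist1_self])
  moreover have "0 \<le> alpha (card U) * ereal (dist1 d x q)"
    using ereal_mult_mono[of "alpha (card U)" 0 0 "ereal (dist1 d x q)"]
      alpha_nonneg[OF d ab fin ne pts box] dist1_nonneg[of d x q] by simp
  ultimately show ?thesis by (simp add: zero_ereal_def)
next
  case False
  obtain cp where m: "Min (dist1 d x ` U) > 0" and cp: "cp \<ge> 0" "ereal cp \<le> alpha (card U)"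
    and V: "Vt d a b x U (dist1 d x) = Min (dist1 d x ` U) * cp"
    using key_point[OF d ab fin ne pts box x False] by blast
  have mle: "Min (dist1 d x ` U) \<le> dist1 d x q" using fin q by simp
  have a0: "0 \<le> alpha (card U)" using cp by (meson ereal_less_eq(5) order_trans)
  have "ereal (Vt d a b x U (dist1 d x)) = ereal cp * ereal (Min (dist1 d x ` U))"
    unfolding V by (simp add: mult.commute)
  also have "\<dots> \<le> alpha (card U) * ereal (dist1 d x q)"
    by (rule ereal_mult_mono) (use a0 m cp mle in auto)
  finally show ?thesis .
qed

theorem part1:
  "\<forall>d a b X U \<pi>. 0 < d \<and> a < b \<and> finite X \<and> X \<subseteq> pts d \<and>
            finite U \<and> U \<noteq> {} \<and> U \<subseteq> pts d \<and>
            (\<forall>x\<in>X \<union> U. in_box d a b x) \<and> (\<forall>x\<in>X. \<pi> x \<in> U) \<longrightarrow>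
            ereal (expected_RT_cost d a b U X) \<le> alpha (card U) * ereal (cost1 d \<pi> X)"
proof (intro allI impI)
  fix d a b X U and \<pi> :: "(nat \<Rightarrow> real) \<Rightarrow> (nat \<Rightarrow> real)"
  assume A: "0 < d \<and> a < b \<and> finite X \<and> X \<subseteq> pts d \<and>
            finite U \<and> U \<noteq> {} \<and> U \<subseteq> pts d \<and>
            (\<forall>x\<in>X \<union> U. in_box d a b x) \<and> (\<forall>x\<in>X. \<pi> x \<in> U)"
  then have d: "0 < d" and ab: "a < b" and finX: "finite X" and ptsX: "X \<subseteq> pts d"
    and fin: "finite U" and ne: "U \<noteq> {}" and pts: "U \<subseteq> pts d"
    and boxX: "\<forall>x\<in>X. in_box d a b x" and box: "\<forall>p\<in>U. in_box d a b p"
    and pi: "\<forall>x\<in>X. \<pi> x \<in> U" by auto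
  have "expected_RT_cost d a b U X = (\<Sum>x\<in>X. \<integral>\<omega>. dist1 d x (leaf_center \<omega> x U) \<partial>cutsM d a b)"
    unfolding expected_RT_cost_def cost1_def
    by (rule Bochner_Integration.integral_sum) (rule integrable_lc[OF d ab fin])
  also have "\<dots> = (\<Sum>x\<in>X. Vt d a b x U (dist1 d x))"
    by (rule sum.cong[OF refl]) (rule integral_lc[OF d ab fin ne pts box])
  finally have E: "expected_RT_cost d a b U X = (\<Sum>x\<in>X. Vt d a b x U (dist1 d x))" .
  have "ereal (expected_RT_cost d a b U X) = (\<Sum>x\<in>X. ereal (Vt d a b x U (dist1 d x)))"
    unfolding E by simp
  also have "\<dots> \<le> (\<Sum>x\<in>X. alpha (card U) * ereal (dist1 d x (\<pi> x)))"
    by (rule sum_mono) (use pt_bound[OF d ab fin ne pts box] ptsX boxX pi in blast)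
  also have "\<dots> = alpha (card U) * (\<Sum>x\<in>X. ereal (dist1 d x (\<pi> x)))"
    by (rule sum_ereal_right_distrib[symmetric]) (simp add: dist1_nonneg)
  also have "\<dots> = alpha (card U) * ereal (cost1 d \<pi> X)"
    unfolding cost1_def by simp
  finally show "ereal (expected_RT_cost d a b U X) \<le> alpha (card U) * ereal (cost1 d \<pi> X)" .
qed


primrec build :: "(nat \<Rightarrow> nat \<times> real) \<Rightarrow> nat \<Rightarrow> nat \<Rightarrow> (nat \<Rightarrow> real) set \<Rightarrow> ttree" where
  "build \<omega> 0 n S = Leaf"
| "build \<omega> (Suc f) n S = (if separates (\<omega> n) S
     then Node (fst (\<omega> n)) (snd (\<omega> n))
       (build \<omega> f (Suc n) {p\<in>S. p (fst (\<omega> n)) \<le> snd (\<omega> n)})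
       (build \<omega> f (Suc n) {p\<in>S. \<not> p (fst (\<omega> n)) \<le> snd (\<omega> n)})
     else build \<omega> f (Suc n) S)"

lemma RS_Suc:
  "region_centers (\<lambda>k. \<omega> (n + k)) y S (Suc f) =
   region_centers (\<lambda>k. \<omega> (Suc n + k)) y (refine (\<omega> n) y S) f"
proof -
  have e: "(\<lambda>k. (\<lambda>k. \<omega> (n + k)) (Suc k)) = (\<lambda>k. \<omega> (Suc n + k))" by simp
  show ?thesis using region_shift[of "\<lambda>k. \<omega> (n + k)" y S f] unfolding e by simp
qed

lemma refine_left: "separates c S \<Longrightarrow> y (fst c) \<le> snd c \<Longrightarrow> refine c y S = {p\<in>S. p (fst c) \<le> snd c}"
  unfolding refine_def by auto

lemma refine_right: "separates c S \<Longrightarrow> \<not> y (fst c) \<le> snd c \<Longrightarrow> refine c y S = {p\<in>S. \<not> p (fst c) \<le> snd c}"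
  unfolding refine_def by auto

lemma build_cuts_ok: "(\<forall>n. fst (\<omega> n) < d) \<Longrightarrow> cuts_ok d (build \<omega> f n S)"
  by (induction f arbitrary: n S) auto

lemma build_leaf_same:
  "leaf_of (build \<omega> f n S) y = leaf_of (build \<omega> f n S) y' \<Longrightarrow>
   region_centers (\<lambda>k. \<omega> (n + k)) y S f = region_centers (\<lambda>k. \<omega> (n + k)) y' S f"
proof (induction f arbitrary: n S)
  case 0 then show ?case by simp
next
  case (Suc f)
  show ?case
  proof (cases "separates (\<omega> n) S")
    case True
    show ?thesis
    proof (cases "y (fst (\<omega> n)) \<le> snd (\<omega> n)")
      case yl: True
      then have y'l: "y' (fst (\<omega> n)) \<le> snd (\<omega> n)" using Suc.prems True by (auto split: if_splits)
      have "leaf_of (build \<omega> f (Suc n) {p\<in>S. p (fst (\<omega> n)) \<le> snd (\<omega> n)}) y =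
            leaf_of (build \<omega> f (Suc n) {p\<in>S. p (fst (\<omega> n)) \<le> snd (\<omega> n)}) y'"
        using Suc.prems True yl y'l by simp
      from Suc.IH[OF this] show ?thesis
        unfolding RS_Suc using refine_left[of "\<omega> n" S y, OF True yl] refine_left[of "\<omega> n" S y', OF True y'l] by simp
    next
      case yr: False
      then have y'r: "\<not> y' (fst (\<omega> n)) \<le> snd (\<omega> n)" using Suc.prems True by (auto split: if_splits)
      have "leaf_of (build \<omega> f (Suc n) {p\<in>S. \<not> p (fst (\<omega> n)) \<le> snd (\<omega> n)}) y =
            leaf_of (build \<omega> f (Suc n) {p\<in>S. \<not> p (fst (\<omega> n)) \<le> snd (\<omega> n)}) y'"
        using Suc.prems True yr y'r by simp
      from Suc.IH[OF this] show ?thesis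
        unfolding RS_Suc using refine_right[of "\<omega> n" S y, OF True yr] refine_right[of "\<omega> n" S y', OF True y'r] by simp
    qed
  next
    case False
    then have "leaf_of (build \<omega> f (Suc n) S) y = leaf_of (build \<omega> f (Suc n) S) y'"
      using Suc.prems by simp
    from Suc.IH[OF this] show ?thesis
      unfolding RS_Suc using False by (simp add: refine_not_sep)
  qed
qed

lemma build_leaves:
  "finite S \<Longrightarrow> S \<noteq> {} \<Longrightarrow> (\<forall>p\<in>S. region_centers (\<lambda>k. \<omega> (n + k)) p S f = {p}) \<Longrightarrow>
   leaves (build \<omega> f n S) = card S"
proof (induction f arbitrary: n S)
  case 0
  then obtain p where "p \<in> S" by blast
  then have "S = {p}" using 0 by auto
  then show ?case by simp
next
  case (Suc f)
  show ?case
  proof (cases "separates (\<omega> n) S")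
    case True
    let ?L = "{p\<in>S. p (fst (\<omega> n)) \<le> snd (\<omega> n)}" and ?R = "{p\<in>S. \<not> p (fst (\<omega> n)) \<le> snd (\<omega> n)}"
    have neL: "?L \<noteq> {}" and neR: "?R \<noteq> {}" using True unfolding separates_def by force+
    have L: "\<forall>p\<in>?L. region_centers (\<lambda>k. \<omega> (Suc n + k)) p ?L f = {p}"
    proof
      fix p assume p: "p \<in> ?L"
      then have "refine (\<omega> n) p S = ?L" using refine_left[OF True] by simp
      then show "region_centers (\<lambda>k. \<omega> (Suc n + k)) p ?L f = {p}"
        using Suc.prems(3) p RS_Suc[of \<omega> n p S f] by simp
    qed
    have R: "\<forall>p\<in>?R. region_centers (\<lambda>k. \<omega> (Suc n + k)) p ?R f = {p}"
    proof
      fix p assume p: "p \<in> ?R"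
      then have "refine (\<omega> n) p S = ?R" using refine_right[OF True] by simp
      then show "region_centers (\<lambda>k. \<omega> (Suc n + k)) p ?R f = {p}"
        using Suc.prems(3) p RS_Suc[of \<omega> n p S f] by simp
    qed
    have "leaves (build \<omega> (Suc f) n S) = card ?L + card ?R"
      using Suc.IH[of ?L "Suc n"] Suc.IH[of ?R "Suc n"] Suc.prems(1) neL neR L R True by simp
    also have "\<dots> = card S"
    proof -
      have "?L \<union> ?R = S" "?L \<inter> ?R = {}" by auto
      then show ?thesis using card_Un_disjoint[of ?L ?R] Suc.prems(1) by simp
    qed
    finally show ?thesis .
  next
    case False
    have "\<forall>p\<in>S. region_centers (\<lambda>k. \<omega> (Suc n + k)) p S f = {p}"
      using Suc.prems(3) RS_Suc[of \<omega> n _ S f] False by (simp add: refine_not_sep)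
    then show ?thesis using Suc.IH[of S "Suc n"] Suc.prems(1,2) False by simp
  qed
qed

lemma tree_cost_le:
  assumes fin: "finite X" and same: "\<forall>x\<in>X. \<forall>y\<in>X. leaf_of T x = leaf_of T y \<longrightarrow> c x = c y"
    and cp: "\<forall>x\<in>X. c x \<in> pts d"
  shows "tree_cost d T X \<le> (\<Sum>x\<in>X. dist1 d x (c x))"
proof -
  define cls where "cls = (\<lambda>x. {y\<in>X. leaf_of T y = leaf_of T x})"
  have "tree_cost d T X = (\<Sum>C\<in>cls ` X. Inf ((\<lambda>c. \<Sum>y\<in>C. dist1 d y c) ` pts d))"
    unfolding tree_cost_def cls_def ..
  also have "\<dots> \<le> (\<Sum>C\<in>cls ` X. \<Sum>y\<in>C. dist1 d y (c y))"
  proof (rule sum_mono)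
    fix C assume "C \<in> cls ` X"
    then obtain x0 where x0: "x0 \<in> X" "C = cls x0" by blast
    have "Inf ((\<lambda>c. \<Sum>y\<in>C. dist1 d y c) ` pts d) \<le> (\<Sum>y\<in>C. dist1 d y (c x0))"
    proof (rule cInf_lower)
      show "(\<Sum>y\<in>C. dist1 d y (c x0)) \<in> (\<lambda>c. \<Sum>y\<in>C. dist1 d y c) ` pts d" using cp x0 by blast
      show "bdd_below ((\<lambda>c. \<Sum>y\<in>C. dist1 d y c) ` pts d)"
        by (rule bdd_belowI[where m=0]) (auto intro: sum_nonneg simp: dist1_nonneg)
    qed
    also have "\<dots> = (\<Sum>y\<in>C. dist1 d y (c y))"
    proof (rule sum.cong[OF refl])
      fix y assume "y \<in> C"
      then have "y \<in> X" "leaf_of T y = leaf_of T x0" using x0 unfolding cls_def by auto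
      then have "c x0 = c y" using same x0(1) by metis
      then show "dist1 d y (c x0) = dist1 d y (c y)" by simp
    qed
    finally show "Inf ((\<lambda>c. \<Sum>y\<in>C. dist1 d y c) ` pts d) \<le> (\<Sum>y\<in>C. dist1 d y (c y))" .
  qed
  also have "\<dots> = (\<Sum>y\<in>\<Union>(cls ` X). dist1 d y (c y))"
  proof (rule sum.Union_disjoint[symmetric, unfolded comp_def])
    show "\<forall>A\<in>cls ` X. finite A" using fin by (auto simp: cls_def)
    show "\<forall>A\<in>cls ` X. \<forall>B\<in>cls ` X. A \<noteq> B \<longrightarrow> A \<inter> B = {}"
    proof (intro ballI impI)
      fix A B assume A: "A \<in> cls ` X" and B: "B \<in> cls ` X" and AB: "A \<noteq> B"
      obtain x1 where x1: "A = cls x1" using A by blast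
      obtain x2 where x2: "B = cls x2" using B by blast
      show "A \<inter> B = {}"
      proof (rule ccontr)
        assume "A \<inter> B \<noteq> {}"
        then obtain z where "z \<in> A" "z \<in> B" by blast
        then have "leaf_of T x1 = leaf_of T x2" using x1 x2 unfolding cls_def by simp
        then have "cls x1 = cls x2" unfolding cls_def by simp
        then show False using AB x1 x2 by simp
      qed
    qed
  qed
  also have "\<Union>(cls ` X) = X" unfolding cls_def by blast
  finally show ?thesis .
qed


lemma region_member:
  "p \<in> region_centers \<omega> x S n \<Longrightarrow> region_centers \<omega> p S n = region_centers \<omega> x S n"
proof (induction n)
  case 0 then show ?case by simp
next
  case (Suc n)
  have pR: "p \<in> region_centers \<omega> x S n" using Suc.prems refine_subset[of "\<omega> n" x "region_centers \<omega> x S n"] by auto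
  then have IH: "region_centers \<omega> p S n = region_centers \<omega> x S n" by (rule Suc.IH)
  have "refine (\<omega> n) p (region_centers \<omega> x S n) = refine (\<omega> n) x (region_centers \<omega> x S n)"
  proof (cases "separates (\<omega> n) (region_centers \<omega> x S n)")
    case True
    then have "p (fst (\<omega> n)) \<le> snd (\<omega> n) \<longleftrightarrow> x (fst (\<omega> n)) \<le> snd (\<omega> n)"
      using Suc.prems True by (auto simp: refine_def)
    then show ?thesis unfolding refine_def by simp
  next
    case False then show ?thesis by (simp add: refine_not_sep)
  qed
  then show ?case using IH by simp
qed

lemma good_tree:
  assumes d: "0 < d" and om: "\<omega> \<in> space (cutsM d a b)" and fin: "finite U" and ne: "U \<noteq> {}"
    and pts: "U \<subseteq> pts d" and trm: "\<forall>p\<in>U. term_ev \<omega> p U" and finX: "finite X"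
  shows "\<exists>T. cuts_ok d T \<and> leaves T = card U \<and> tree_cost d T X \<le> cost1 d (\<lambda>x. leaf_center \<omega> x U) X"
proof -
  have "\<forall>p\<in>U. \<exists>n. region_centers \<omega> p U n = {p}"
  proof
    fix p assume p: "p \<in> U"
    then obtain n q where nq: "region_centers \<omega> p U n = {q}" using trm unfolding term_ev_def by blast
    moreover have "p \<in> region_centers \<omega> p U n" by (rule x_in_region[OF p])
    ultimately show "\<exists>n. region_centers \<omega> p U n = {p}" by auto
  qed
  then obtain g where g: "\<forall>p\<in>U. region_centers \<omega> p U (g p) = {p}" by metis
  define N where "N = Max (g ` U)"
  have RN: "region_centers \<omega> p U N = {p}" if p: "p \<in> U" for p
  proof -
    have "g p \<le> N" unfolding N_def using fin p by simp
    then show ?thesis using region_single_stays[of \<omega> p U "g p" p N] g p ne by simp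
  qed
  have lcN: "\<exists>p\<in>U. region_centers \<omega> z U N = {p} \<and> leaf_center \<omega> z U = p" for z
  proof -
    obtain p where p: "p \<in> region_centers \<omega> z U N" using region_nonempty[OF ne] by blast
    then have pU: "p \<in> U" using region_subset by blast
    have "region_centers \<omega> z U N = {p}" using region_member[OF p] RN[OF pU] by simp
    then show ?thesis using leaf_center_eq[OF ne] pU by blast
  qed
  have e0: "(\<lambda>k. \<omega> (0 + k)) = \<omega>" by simp
  define T where "T = build \<omega> N 0 U"
  have "\<forall>n. fst (\<omega> n) < d" using om unfolding space_cutsM by (auto simp: mem_Times_iff)
  then have c: "cuts_ok d T" unfolding T_def by (rule build_cuts_ok)
  have l: "leaves T = card U" unfolding T_def
    by (rule build_leaves[OF fin ne]) (use RN e0 in simp)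
  have "tree_cost d T X \<le> (\<Sum>x\<in>X. dist1 d x (leaf_center \<omega> x U))"
  proof (rule tree_cost_le[OF finX])
    show "\<forall>x\<in>X. \<forall>y\<in>X. leaf_of T x = leaf_of T y \<longrightarrow> leaf_center \<omega> x U = leaf_center \<omega> y U"
    proof (intro ballI impI)
      fix x y assume "leaf_of T x = leaf_of T y"
      then have "region_centers \<omega> x U N = region_centers \<omega> y U N"
        using build_leaf_same[of \<omega> N 0 U x y] unfolding T_def e0 by simp
      then show "leaf_center \<omega> x U = leaf_center \<omega> y U" using lcN[of x] lcN[of y] by auto
    qed
    show "\<forall>x\<in>X. leaf_center \<omega> x U \<in> pts d" using lcN pts by blast
  qed
  then show ?thesis using c l unfolding cost1_def by blast
qed

lemma exists_box:
  assumes "finite P"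
  shows "\<exists>a b. a < b \<and> (\<forall>p\<in>P. in_box d a b p)"
proof -
  define M where "M = (\<Sum>p\<in>P. \<Sum>i<d. \<bar>p i\<bar>) + 1"
  have "\<bar>p i\<bar> < M" if "p \<in> P" "i < d" for p i
  proof -
    have "\<bar>p i\<bar> \<le> (\<Sum>i<d. \<bar>p i\<bar>)" by (rule member_le_sum) (use that in auto)
    also have "\<dots> \<le> (\<Sum>p\<in>P. \<Sum>i<d. \<bar>p i\<bar>)"
      by (rule member_le_sum[of p P "\<lambda>p. \<Sum>i<d. \<bar>p i\<bar>"]) (use that assms in \<open>auto intro: sum_nonneg\<close>)
    finally show ?thesis unfolding M_def by simp
  qed
  then have "\<forall>p\<in>P. in_box d (-M) M p" unfolding in_box_def
  proof (intro ballI allI impI)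
    fix p i assume "\<And>p i. p \<in> P \<Longrightarrow> i < d \<Longrightarrow> \<bar>p i\<bar> < M" "p \<in> P" "i < d"
    then have "\<bar>p i\<bar> < M" by blast
    then show "- M \<le> p i \<and> p i \<le> M" by (simp add: abs_less_iff)
  qed
  moreover have "M > 0" unfolding M_def by (simp add: sum_nonneg add_nonneg_pos)
  ultimately show ?thesis by (intro exI[of _ "-M"] exI[of _ M]) auto
qed


lemma tree_exists:
  assumes d: "0 < d" and finX: "finite X" and ptsX: "X \<subseteq> pts d"
    and fin: "finite U" and ne: "U \<noteq> {}" and pts: "U \<subseteq> pts d"
  shows "\<exists>T. cuts_ok d T \<and> leaves T = card U \<and>
     ereal (tree_cost d T X) \<le> alpha (card U) * ereal (\<Sum>x\<in>X. Min (dist1 d x ` U))"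
proof -
  obtain a b where ab: "a < b" and boxall: "\<forall>p\<in>X \<union> U. in_box d a b p"
    using exists_box[of "X \<union> U" d] finX fin by auto
  have box: "\<forall>p\<in>U. in_box d a b p" using boxall by auto
  define \<pi> where "\<pi> = (\<lambda>x. SOME q. q \<in> U \<and> dist1 d x q = Min (dist1 d x ` U))"
  have \<pi>: "\<pi> x \<in> U \<and> dist1 d x (\<pi> x) = Min (dist1 d x ` U)" for x
  proof -
    have "Min (dist1 d x ` U) \<in> dist1 d x ` U" using fin ne by (intro Min_in) auto
    then have "\<exists>q. q \<in> U \<and> dist1 d x q = Min (dist1 d x ` U)" by auto
    then show ?thesis unfolding \<pi>_def by (rule someI_ex)
  qed
  have c1: "cost1 d \<pi> X = (\<Sum>x\<in>X. Min (dist1 d x ` U))" unfolding cost1_def using \<pi> by simp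
  define B where "B = alpha (card U) * ereal (\<Sum>x\<in>X. Min (dist1 d x ` U))"
  have E0: "ereal (expected_RT_cost d a b U X) \<le> alpha (card U) * ereal (cost1 d \<pi> X)"
    by (rule part1[rule_format]) (use d ab finX ptsX fin ne pts boxall \<pi> in auto)
  have E: "ereal (expected_RT_cost d a b U X) \<le> B"
    using E0 unfolding B_def c1 .
  have a0: "alpha (card U) \<ge> 0" by (rule alpha_nonneg[OF d ab fin ne pts box])
  have s0: "(\<Sum>x\<in>X. Min (dist1 d x ` U)) \<ge> 0"
    by (rule sum_nonneg) (simp add: Min_ge_iff fin ne dist1_nonneg)
  have B0: "B \<ge> 0" unfolding B_def using ereal_mult_mono[of "alpha (card U)" 0 0] a0 s0 by simp
  interpret P: prob_space "cutsM d a b" using prob_cutsM d ab by blast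
  define Y where "Y = (\<lambda>\<omega>. cost1 d (\<lambda>x. leaf_center \<omega> x U) X)"
  have AEt: "AE \<omega> in cutsM d a b. \<forall>p\<in>U. term_ev \<omega> p U"
    by (rule AE_finite_allI[OF fin]) (rule AE_term[OF d ab fin ne pts box])
  have "\<exists>\<omega>\<in>space (cutsM d a b). (\<forall>p\<in>U. term_ev \<omega> p U) \<and> ereal (Y \<omega>) \<le> B"
  proof (cases B)
    case PInf
    show ?thesis
    proof (rule ccontr)
      assume "\<not> ?thesis"
      then have nt: "\<forall>\<omega>\<in>space (cutsM d a b). \<not> (\<forall>p\<in>U. term_ev \<omega> p U)" using PInf by auto
      have "AE \<omega> in cutsM d a b. False" using AEt AE_space[of "cutsM d a b"]
      proof eventually_elim
        case (elim \<omega>) then show False using nt by blast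
      qed
      then show False by simp
    qed
  next
    case MInf then show ?thesis using B0 by simp
  next
    case (real R)
    have intY: "integrable (cutsM d a b) Y"
      unfolding Y_def cost1_def by (intro Bochner_Integration.integrable_sum integrable_lc[OF d ab fin])
    have EY: "expected_RT_cost d a b U X = integral\<^sup>L (cutsM d a b) Y"
      unfolding expected_RT_cost_def Y_def ..
    show ?thesis
    proof (rule ccontr)
      assume "\<not> ?thesis"
      then have "\<forall>\<omega>\<in>space (cutsM d a b). (\<forall>p\<in>U. term_ev \<omega> p U) \<longrightarrow> R < Y \<omega>"
        using real by auto
      then have nt: "\<forall>\<omega>\<in>space (cutsM d a b). (\<forall>p\<in>U. term_ev \<omega> p U) \<longrightarrow> R < Y \<omega>" .
      have "AE \<omega> in cutsM d a b. R < Y \<omega>" using AEt AE_space[of "cutsM d a b"]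
      proof eventually_elim
        case (elim \<omega>) then show "R < Y \<omega>" using nt by blast
      qed
      then have "R < integral\<^sup>L (cutsM d a b) Y" by (rule P.expectation_greater[OF intY])
      then show False using E EY real by simp
    qed
  qed
  then obtain \<omega> where om: "\<omega> \<in> space (cutsM d a b)" and trm: "\<forall>p\<in>U. term_ev \<omega> p U"
    and Yb: "ereal (Y \<omega>) \<le> B" by blast
  obtain T where T: "cuts_ok d T" "leaves T = card U" "tree_cost d T X \<le> Y \<omega>"
    using good_tree[OF d om fin ne pts trm finX] unfolding Y_def by blast
  have "ereal (tree_cost d T X) \<le> B" using T(3) Yb by (meson ereal_less_eq(3) order_trans)
  then show ?thesis using T unfolding B_def by blast
qed


lemma zero_pts: "(\<lambda>_. 0) \<in> pts d"
  unfolding pts_def by simp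

lemma tree_cost_nonneg: "tree_cost d T X \<ge> 0"
  unfolding tree_cost_def
proof (rule sum_nonneg)
  fix C
  show "0 \<le> Inf ((\<lambda>c. \<Sum>y\<in>C. dist1 d y c) ` pts d)"
  proof (rule cInf_greatest)
    show "(\<lambda>c. \<Sum>y\<in>C. dist1 d y c) ` pts d \<noteq> {}" using zero_pts by blast
    show "\<And>z. z \<in> (\<lambda>c. \<Sum>y\<in>C. dist1 d y c) ` pts d \<Longrightarrow> 0 \<le> z"
      by (auto intro!: sum_nonneg simp: dist1_nonneg)
  qed
qed

lemma kmed_nonempty:
  assumes "0 < d"
  shows "\<exists>U. U \<subseteq> pts d \<and> finite U \<and> card U = k"
proof -
  define f where "f = (\<lambda>j::nat. (\<lambda>i::nat. if i = 0 then real j else 0))"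
  have inj: "inj_on f {..<k}"
  proof (rule inj_onI)
    fix j j' assume "f j = f j'"
    then have "f j 0 = f j' 0" by simp
    then show "j = j'" unfolding f_def by simp
  qed
  have "f ` {..<k} \<subseteq> pts d" unfolding f_def pts_def using assms by auto
  moreover have "card (f ` {..<k}) = k" using card_image[OF inj] by simp
  ultimately show ?thesis by blast
qed

theorem part2: "\<forall>k\<ge>1. price_of_explainability k \<le> alpha k"
proof (intro allI impI)
  fix k :: nat assume k: "1 \<le> k"
  show "price_of_explainability k \<le> alpha k"
    unfolding price_of_explainability_def
  proof (rule SUP_least)
    fix dX assume "dX \<in> {(d, X). 0 < d \<and> finite X \<and> X \<subseteq> pts d}"
    then obtain d X where dX: "dX = (d, X)" and d: "0 < d" and finX: "finite X" and ptsX: "X \<subseteq> pts d"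
      by blast
    define I where "I = (INF T \<in> {T. cuts_ok d T \<and> leaves T = k}. ereal (tree_cost d T X))"
    define cst where "cst = (\<lambda>U. \<Sum>x\<in>X. Min (dist1 d x ` U))"
    have bound: "I \<le> alpha k * ereal (cst U)" if U: "U \<subseteq> pts d" "finite U" "card U = k" for U
    proof -
      have ne: "U \<noteq> {}" using U k by auto
      obtain T where T: "cuts_ok d T" "leaves T = card U"
        "ereal (tree_cost d T X) \<le> alpha (card U) * ereal (cst U)"
        using tree_exists[OF d finX ptsX U(2) ne U(1)] unfolding cst_def by blast
      show ?thesis unfolding I_def
        by (rule INF_lower2[where i=T]) (use T U in auto)
    qed
    obtain U0 where U0: "U0 \<subseteq> pts d" "finite U0" "card U0 = k" using kmed_nonempty[OF d] by blast
    have neU0: "U0 \<noteq> {}" using U0 k by auto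
    obtain a b where ab: "a < b" and box0: "\<forall>p\<in>U0. in_box d a b p"
      using exists_box[OF U0(2)] by blast
    have a0: "alpha k \<ge> 0" using alpha_nonneg[OF d ab U0(2) neU0 U0(1) box0] U0(3) by simp
    have I0: "I \<ge> 0" unfolding I_def by (rule INF_greatest) (simp add: tree_cost_nonneg)
    have cst0: "cst U \<ge> 0" if "finite U" "U \<noteq> {}" for U
      unfolding cst_def by (rule sum_nonneg) (simp add: Min_ge_iff that dist1_nonneg)
    define Us where "Us = {U. U \<subseteq> pts d \<and> finite U \<and> card U = k}"
    define CS where "CS = cst ` Us"
    have "{(\<Sum>x\<in>X. Min (dist1 d x ` U)) | U. U \<subseteq> pts d \<and> finite U \<and> card U = k} = CS"
      unfolding CS_def Us_def cst_def by auto
    then have opt: "kmed_opt d k X = Inf CS" unfolding kmed_opt_def by simp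
    have CSne: "CS \<noteq> {}" unfolding CS_def Us_def using U0 by blast
    have CS0: "\<forall>z\<in>CS. z \<ge> 0"
    proof
      fix z assume "z \<in> CS"
      then obtain U where "U \<in> Us" and z: "z = cst U" unfolding CS_def by blast
      then have U: "U \<subseteq> pts d" "finite U" "card U = k" "z = cst U" unfolding Us_def by auto
      have "U \<noteq> {}" using U k by auto
      then show "z \<ge> 0" using cst0[OF U(2)] U(4) by simp
    qed
    have opt0: "Inf CS \<ge> 0" using CSne CS0 by (intro cInf_greatest) auto
    have goal: "I / ereal (kmed_opt d k X) \<le> alpha k"
    proof (cases "alpha k")
      case PInf then show ?thesis by simp
    next
      case MInf then show ?thesis using a0 by simp
    next
      case (real r)
      have r0: "r \<ge> 0" using a0 real by simp
      have "I \<le> ereal (r * cst U0)" using bound[OF U0] real by simp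
      then obtain i where Ii: "I = ereal i" using I0 by (cases I) auto
      have i0: "i \<ge> 0" using I0 Ii by simp
      have iU: "i \<le> r * z" if zin: "z \<in> CS" for z
      proof -
        obtain U where "U \<in> Us" and z: "z = cst U" using zin unfolding CS_def by blast
        then have U: "U \<subseteq> pts d" "finite U" "card U = k" unfolding Us_def by auto
        have "ereal i \<le> ereal r * ereal (cst U)" using bound[OF U] unfolding real Ii .
        then have "i \<le> r * cst U" by simp
        then show ?thesis unfolding z .
      qed
      have iopt: "i \<le> r * Inf CS"
      proof (cases "r = 0")
        case True
        obtain z where "z \<in> CS" using CSne by blast
        then show ?thesis using iU[of z] True by simp
      next
        case False
        then have rp: "r > 0" using r0 by simp
        have "i / r \<le> Inf CS"
        proof (rule cInf_greatest[OF CSne])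
          fix z assume "z \<in> CS"
          then show "i / r \<le> z" using iU[of z] rp by (simp add: divide_le_eq mult.commute)
        qed
        then show ?thesis using rp by (simp add: divide_le_eq mult.commute)
      qed
      show ?thesis
      proof (cases "Inf CS = 0")
        case True
        then have "i = 0" using iopt i0 by simp
        then show ?thesis unfolding opt Ii real using True r0 by simp
      next
        case False
        then have op: "Inf CS > 0" using opt0 by simp
        have "i / Inf CS \<le> r" using iopt op by (simp add: divide_le_eq mult.commute)
        then show ?thesis unfolding opt Ii real using op by simp
      qed
    qed
    show "(\<lambda>(d, X). (INF T \<in> {T. cuts_ok d T \<and> leaves T = k}. ereal (tree_cost d T X)) / ereal (kmed_opt d k X)) dX \<le> alpha k"
      unfolding dX using goal unfolding I_def by simp
  qed
qed

theorem lemma2p2: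
  shows "(\<forall>d a b X U \<pi>. 0 < d \<and> a < b \<and> finite X \<and> X \<subseteq> pts d \<and>
            finite U \<and> U \<noteq> {} \<and> U \<subseteq> pts d \<and>
            (\<forall>x\<in>X \<union> U. in_box d a b x) \<and> (\<forall>x\<in>X. \<pi> x \<in> U) \<longrightarrow>
            ereal (expected_RT_cost d a b U X) \<le> alpha (card U) * ereal (cost1 d \<pi> X))
       \<and> (\<forall>k\<ge>1. price_of_explainability k \<le> alpha k)"
  by (rule conjI[OF part1 part2])

end
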